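(* Let $\Omega\subset\mathbb{R}^d$ be a bounded domain, $\gamma>0$, $I\in\mathcal{C}_b(\Omega)$ (time-independent), $G:\mathbb{R}^2\to\mathbb{R}$ smooth with $\|G\|_\infty+\|\nabla G\|_\infty\le1$. Let $n_0\in\mathcal{C}_b(\Omega,L^1_s)$, $n_0\ge0$, $w_0\in\mathcal{C}_b(\Omega\times\Omega)$, $w_0\ge0$, with $g(x)=\int_0^\infty n_0(s,x)ds$ satisfying $\int_\Omega g=1$. Assume $p\in W^{1,\infty}((0,\infty)\times\mathbb{R})$ satisfies $p_*\le p(s,S)\le p_\infty$ for all $s,S$, for constants $p_*,p_\infty>0$. For $\gamma$ and $\|\tfrac{\partial p}{\partial S}\|_\infty$ small enough, let $(n^*,N^*,S^*,w^* )$ be the stationary state with $\int_0^\infty n^*(s,x)ds=g(x)$ of the system $\partial_t n+\partial_s n+p(s,S)n=0$, $N=n(t,0,x)=\int_0^\infty p(s,S)n\,ds$, $S=\int_\Omega w(t,x,y)N(t,y)dy+I(x)$, $\partial_tw=-w+\gamma G(N(t,x),N(t,y))$. Then there exist $C,\lambda>0$ such that the solution $(n,N,S,w)$, with $\int_0^\infty n(t,s,x)ds=g(x)$, of the limit system $$\begin{cases}\partial_s n+p(s,S(t,x))n=0,\\ N(t,x)=n(t,0,x)=\int_0^\infty p(s,S(t,x))n\,ds,\\ S(t,x)=\int_\Omega w(t,x,y)N(t,y)\,dy+I(x),\\ \partial_t w=-w+\gamma G(N(t,x),N(t,y)),\\ w(0)=w_0,\end{cases}$$ satisfies for all $t\ge0$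 $$\|n(t)-n^*\|_{L^1_{s,x}}+\|w(t)-w^*\|_{L^1_{x,y}}\le Ce^{-\lambda t}\|w_0-w^*\|_{L^1_{x,y}}.$$ Moreover $\|S(t)-S^*\|_{L^1_x}$ and $\|N(t)-N^*\|_{L^1_x}$ converge exponentially to $0$ as $t\to\infty$.
   Context: $L^1_s=L^1((0,\infty))$, $L^1_{s,x}=L^1((0,\infty)\times\Omega)$, $L^1_{x,y}=L^1(\Omega\times\Omega)$. A stationary state is a time-independent solution: $\partial_sn^*+p(s,S^* )n^*=0$, $N^*(x)=n^*(0,x)=\int p(s,S^*(x))n^*ds$, $S^*=\int w^*N^*dy+I$, $w^*(x,y)=\gamma G(N^*(x),N^*(y))$. *)

theory Defs
  imports "HOL-Analysis.Analysis"
begin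

fun Ck :: "nat \<Rightarrow> ('a::real_normed_vector \<Rightarrow> 'b::real_normed_vector) \<Rightarrow> bool" where
  "Ck 0 f = continuous_on UNIV f"
| "Ck (Suc k) f = (\<exists>f'. (\<forall>x. (f has_derivative f' x) (at x)) \<and> (\<forall>v. Ck k (\<lambda>x. f' x v)))"

definition smooth :: "('a::real_normed_vector \<Rightarrow> 'b::real_normed_vector) \<Rightarrow> bool" where
  "smooth f = (\<forall>k. Ck k f)"

definition bounded_domain :: "'a::euclidean_space set \<Rightarrow> bool" where
  "bounded_domain \<Omega> = (open \<Omega> \<and> connected \<Omega> \<and> bounded \<Omega> \<and> \<Omega> \<noteq> {})"

text \<open>W^{1,\<infinity>}((0,\<infinity>) x R): bounded and Lipschitz (on this convex domain).\<close>
definition W1inf :: "(real \<Rightarrow> real \<Rightarrow> real) \<Rightarrow> bool" where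
  "W1inf p = (bounded ((\<lambda>(s,S). p s S) ` ({0<..} \<times> UNIV)) \<and>
              (\<exists>L. L-lipschitz_on ({0<..} \<times> UNIV) (\<lambda>(s,S). p s S)))"

text \<open>\<parallel>\<partial>p/\<partial>S\<parallel>_\<infinity> \<le> \<delta>, expressed as a uniform Lipschitz bound in S.\<close>
definition dS_bound :: "(real \<Rightarrow> real \<Rightarrow> real) \<Rightarrow> real \<Rightarrow> bool" where
  "dS_bound p \<delta> = (\<forall>s>0. \<forall>S1 S2. \<bar>p s S1 - p s S2\<bar> \<le> \<delta> * \<bar>S1 - S2\<bar>)"

definition L1_s :: "(real \<Rightarrow> real) \<Rightarrow> ennreal" where
  "L1_s f = (\<integral>\<^sup>+ s. indicator {0<..} s * ennreal \<bar>f s\<bar> \<partial>lborel)"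

definition L1_x :: "'a::euclidean_space set \<Rightarrow> ('a \<Rightarrow> real) \<Rightarrow> ennreal" where
  "L1_x \<Omega> f = (\<integral>\<^sup>+ x. indicator \<Omega> x * ennreal \<bar>f x\<bar> \<partial>lborel)"

definition L1_sx :: "'a::euclidean_space set \<Rightarrow> (real \<Rightarrow> 'a \<Rightarrow> real) \<Rightarrow> ennreal" where
  "L1_sx \<Omega> f = (\<integral>\<^sup>+ x. indicator \<Omega> x * L1_s (\<lambda>s. f s x) \<partial>lborel)"

definition L1_xy :: "'a::euclidean_space set \<Rightarrow> ('a \<Rightarrow> 'a \<Rightarrow> real) \<Rightarrow> ennreal" where
  "L1_xy \<Omega> f = (\<integral>\<^sup>+ x. indicator \<Omega> x * L1_x \<Omega> (\<lambda>y. f x y) \<partial>lborel)"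

definition Cb_L1s :: "'a::euclidean_space set \<Rightarrow> (real \<Rightarrow> 'a \<Rightarrow> real) \<Rightarrow> bool" where
  "Cb_L1s \<Omega> n0 =
    ((\<forall>x\<in>\<Omega>. set_integrable lborel {0<..} (\<lambda>s. n0 s x)) \<and>
     (\<forall>x\<in>\<Omega>. \<forall>e>0. \<exists>d>0. \<forall>y\<in>\<Omega>. dist y x < d \<longrightarrow> L1_s (\<lambda>s. n0 s y - n0 s x) < ennreal e) \<and>
     (\<exists>B. \<forall>x\<in>\<Omega>. L1_s (\<lambda>s. n0 s x) \<le> ennreal B))"

definition stationary_state ::
  "'a::euclidean_space set \<Rightarrow> (real \<Rightarrow> real \<Rightarrow> real) \<Rightarrow> real \<Rightarrow> (real \<times> real \<Rightarrow> real) \<Rightarrow> ('a \<Rightarrow> real)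
   \<Rightarrow> ('a \<Rightarrow> real) \<Rightarrow> (real \<Rightarrow> 'a \<Rightarrow> real) \<Rightarrow> ('a \<Rightarrow> real) \<Rightarrow> ('a \<Rightarrow> real) \<Rightarrow> ('a \<Rightarrow> 'a \<Rightarrow> real) \<Rightarrow> bool"
  where
  "stationary_state \<Omega> p \<gamma> G I g ns Ns Ss ws =
    ((\<forall>x\<in>\<Omega>.
        continuous_on {0..} (\<lambda>s. ns s x) \<and>
        (\<forall>s>0. ((\<lambda>\<sigma>. ns \<sigma> x) has_real_derivative (- p s (Ss x) * ns s x)) (at s)) \<and>
        Ns x = ns 0 x \<and>
        set_integrable lborel {0<..} (\<lambda>s. p s (Ss x) * ns s x) \<and>
        Ns x = (LINT s:{0<..}|lborel. p s (Ss x) * ns s x) \<and>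
        set_integrable lborel \<Omega> (\<lambda>y. ws x y * Ns y) \<and>
        Ss x = (LINT y:\<Omega>|lborel. ws x y * Ns y) + I x \<and>
        set_integrable lborel {0<..} (\<lambda>s. ns s x) \<and>
        (LINT s:{0<..}|lborel. ns s x) = g x) \<and>
     (\<forall>x\<in>\<Omega>. \<forall>y\<in>\<Omega>. ws x y = \<gamma> * G (Ns x, Ns y)))"

definition limit_solution ::
  "'a::euclidean_space set \<Rightarrow> (real \<Rightarrow> real \<Rightarrow> real) \<Rightarrow> real \<Rightarrow> (real \<times> real \<Rightarrow> real) \<Rightarrow> ('a \<Rightarrow> real)
   \<Rightarrow> ('a \<Rightarrow> real) \<Rightarrow> ('a \<Rightarrow> 'a \<Rightarrow> real)
   \<Rightarrow> (real \<Rightarrow> real \<Rightarrow> 'a \<Rightarrow> real) \<Rightarrow> (real \<Rightarrow> 'a \<Rightarrow> real) \<Rightarrow> (real \<Rightarrow> 'a \<Rightarrow> real)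
   \<Rightarrow> (real \<Rightarrow> 'a \<Rightarrow> 'a \<Rightarrow> real) \<Rightarrow> bool"
  where
  "limit_solution \<Omega> p \<gamma> G I g w0 n N S w =
    ((\<forall>t\<ge>0. \<forall>x\<in>\<Omega>.
        continuous_on {0..} (\<lambda>s. n t s x) \<and>
        (\<forall>s>0. ((\<lambda>\<sigma>. n t \<sigma> x) has_real_derivative (- p s (S t x) * n t s x)) (at s)) \<and>
        N t x = n t 0 x \<and>
        set_integrable lborel {0<..} (\<lambda>s. p s (S t x) * n t s x) \<and>
        N t x = (LINT s:{0<..}|lborel. p s (S t x) * n t s x) \<and>
        set_integrable lborel \<Omega> (\<lambda>y. w t x y * N t y) \<and>
        S t x = (LINT y:\<Omega>|lborel. w t x y * N t y) + I x \<and>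
        set_integrable lborel {0<..} (\<lambda>s. n t s x) \<and>
        (LINT s:{0<..}|lborel. n t s x) = g x) \<and>
     (\<forall>x\<in>\<Omega>. \<forall>y\<in>\<Omega>.
        continuous_on {0..} (\<lambda>t. w t x y) \<and>
        (\<forall>t>0. ((\<lambda>\<tau>. w \<tau> x y) has_real_derivative (- w t x y + \<gamma> * G (N t x, N t y))) (at t)) \<and>
        w 0 x y = w0 x y))"

end

theory Submission
  imports Defs "HOL-Probability.Distributions"
begin


lemma ode_bound:
  fixes e k :: "real \<Rightarrow> real" and lam A T :: real
  assumes lam: "0 \<le> lam" "lam < 1" and A: "0 \<le> A" and T: "0 \<le> T"
    and cont: "continuous_on {0..T} e"
    and der: "\<And>t. 0 < t \<Longrightarrow> t < T \<Longrightarrow> (e has_real_derivative (- e t + k t)) (at t)"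
    and kb: "\<And>t. 0 < t \<Longrightarrow> t < T \<Longrightarrow> \<bar>k t\<bar> \<le> A * exp (- lam * t)"
  shows "\<bar>e T\<bar> \<le> exp (- T) * \<bar>e 0\<bar> + A / (1 - lam) * (exp (- lam * T) - exp (- T))"
proof -
  define c where "c = A / (1 - lam)"
  have c0: "c \<ge> 0" using A lam by (simp add: c_def)
  have ekb: "\<bar>exp t * k t\<bar> \<le> A * exp ((1 - lam) * t)" if "0 < t" "t < T" for t
  proof -
    have "\<bar>exp t * k t\<bar> = exp t * \<bar>k t\<bar>" by (simp add: abs_mult)
    also have "\<dots> \<le> exp t * (A * exp (- lam * t))" using kb[OF that] by simp
    also have "\<dots> = A * exp ((1 - lam) * t)" by (simp add: exp_add[symmetric] algebra_simps)
    finally show ?thesis .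
  qed
  have dexp: "((\<lambda>t. exp ((1 - lam) * t)) has_real_derivative (1 - lam) * exp ((1 - lam) * t)) (at t)" for t
    by (auto intro!: derivative_eq_intros)
  have cexp: "continuous_on {0..T} (\<lambda>t. exp ((1 - lam) * t))" by (intro continuous_intros)
  have cu: "continuous_on {0..T} (\<lambda>t. exp t * e t - c * exp ((1 - lam) * t))"
    and cv: "continuous_on {0..T} (\<lambda>t. exp t * e t + c * exp ((1 - lam) * t))"
    by (intro continuous_intros cont)+
  have cl: "c * (1 - lam) = A" using lam by (simp add: c_def)
  have dm: "((\<lambda>x. exp x * e x) has_real_derivative exp t * k t) (at t)" if "0 < t" "t < T" for t
  proof -
    have de: "(e has_real_derivative (k t - e t)) (at t)" using der[OF that] by (simp add: algebra_simps)
    show ?thesis using DERIV_mult[OF DERIV_exp de] by (rule DERIV_cong) (simp add: algebra_simps)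
  qed
  have du: "((\<lambda>t. exp t * e t - c * exp ((1 - lam) * t)) has_real_derivative (exp t * k t - A * exp ((1 - lam) * t))) (at t)"
    if "0 < t" "t < T" for t
    using DERIV_diff[OF dm[OF that] DERIV_cmult[OF dexp, of c]] by (rule DERIV_cong) (simp add: cl[symmetric])
  have dv: "((\<lambda>t. exp t * e t + c * exp ((1 - lam) * t)) has_real_derivative (exp t * k t + A * exp ((1 - lam) * t))) (at t)"
    if "0 < t" "t < T" for t
    using DERIV_add[OF dm[OF that] DERIV_cmult[OF dexp, of c]] by (rule DERIV_cong) (simp add: cl[symmetric])
  have u: "exp T * e T - c * exp ((1 - lam) * T) \<le> exp 0 * e 0 - c * exp ((1 - lam) * 0)"
  proof (rule DERIV_nonpos_imp_decreasing_open[OF T _ cu])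
    fix t assume t: "0 < t" "t < T"
    have "exp t * k t - A * exp ((1 - lam) * t) \<le> 0" using ekb[OF t] by (simp add: abs_le_iff)
    then show "\<exists>y. ((\<lambda>t. exp t * e t - c * exp ((1 - lam) * t)) has_real_derivative y) (at t) \<and> y \<le> 0"
      using du[OF t] by blast
  qed
  have v: "exp 0 * e 0 + c * exp ((1 - lam) * 0) \<le> exp T * e T + c * exp ((1 - lam) * T)"
  proof (rule DERIV_nonneg_imp_increasing_open[OF T _ cv])
    fix t assume t: "0 < t" "t < T"
    have "exp t * k t + A * exp ((1 - lam) * t) \<ge> 0" using ekb[OF t] by (simp add: abs_le_iff)
    then show "\<exists>y. ((\<lambda>t. exp t * e t + c * exp ((1 - lam) * t)) has_real_derivative y) (at t) \<and> y \<ge> 0"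
      using dv[OF t] by blast
  qed
  have "\<bar>exp T * e T - e 0\<bar> \<le> c * (exp ((1 - lam) * T) - 1)" using u v by (simp add: abs_le_iff right_diff_distrib)
  hence "exp (- T) * \<bar>exp T * e T - e 0\<bar> \<le> exp (- T) * (c * (exp ((1 - lam) * T) - 1))"
    by (simp add: mult_left_mono)
  moreover have "exp (- T) * \<bar>exp T * e T - e 0\<bar> = \<bar>e T - exp (- T) * e 0\<bar>"
    by (simp add: abs_mult[symmetric] algebra_simps exp_minus field_simps)
  moreover have "exp (- T) * (c * (exp ((1 - lam) * T) - 1)) = c * (exp (- lam * T) - exp (- T))"
    by (simp add: algebra_simps exp_add[symmetric])
  ultimately have "\<bar>e T - exp (- T) * e 0\<bar> \<le> c * (exp (- lam * T) - exp (- T))" by simp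
  moreover have "\<bar>exp (- T) * e 0\<bar> = exp (- T) * \<bar>e 0\<bar>" by (simp add: abs_mult)
  ultimately show ?thesis unfolding c_def by linarith
qed




lemma exp_moment:
  fixes c :: real and k :: nat
  assumes c: "0 < c"
  shows "has_bochner_integral lborel (\<lambda>s. indicator {0<..} s *\<^sub>R (s ^ k * exp (- c * s))) (fact k / c ^ (Suc k))"
proof (rule has_bochner_integral_nn_integral)
  show "(\<lambda>s. indicator {0<..} s *\<^sub>R (s ^ k * exp (- c * s))) \<in> borel_measurable lborel" by measurable
  show "0 \<le> fact k / c ^ (Suc k)" using c by simp
  show "AE x in lborel. 0 \<le> indicator {0<..} x *\<^sub>R (x ^ k * exp (- c * x))"
    by (auto simp: indicator_def)
  have "(\<integral>\<^sup>+ x. ennreal (erlang_density 0 c x * x ^ k) \<partial>lborel) = fact k / c ^ k"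
    using nn_integral_erlang_ith_moment[OF c, of 0 k] by simp
  moreover have "(\<integral>\<^sup>+ x. ennreal (erlang_density 0 c x * x ^ k) \<partial>lborel)
      = (\<integral>\<^sup>+ x. ennreal c * ennreal (indicator {0<..} x *\<^sub>R (x ^ k * exp (- c * x))) \<partial>lborel)"
  proof (rule nn_integral_cong_AE)
    show "AE x in lborel. ennreal (erlang_density 0 c x * x ^ k) = ennreal c * ennreal (indicator {0<..} x *\<^sub>R (x ^ k * exp (- c * x)))"
      using AE_lborel_singleton[of 0]
    proof eventually_elim
      case (elim x)
      then show ?case using c
        by (auto simp: erlang_density_def indicator_def ennreal_mult[symmetric] mult_ac)
    qed
  qed
  moreover have "\<dots> = ennreal c * (\<integral>\<^sup>+ x. ennreal (indicator {0<..} x *\<^sub>R (x ^ k * exp (- c * x))) \<partial>lborel)"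
    by (rule nn_integral_cmult) simp
  ultimately have "ennreal c * (\<integral>\<^sup>+ x. ennreal (indicator {0<..} x *\<^sub>R (x ^ k * exp (- c * x))) \<partial>lborel) = ennreal c * ennreal (fact k / c ^ Suc k)"
    using c by (simp add: ennreal_mult[symmetric] field_simps)
  then show "(\<integral>\<^sup>+ x. ennreal (indicator {0<..} x *\<^sub>R (x ^ k * exp (- c * x))) \<partial>lborel) = ennreal (fact k / c ^ Suc k)"
    using c by (simp add: mult.commute[of "ennreal c"] mult_right_ennreal_cancel)
qed




definition ext_p :: "(real \<Rightarrow> real \<Rightarrow> real) \<Rightarrow> real \<Rightarrow> real \<Rightarrow> real" where
  "ext_p p \<sigma> = (SOME h. continuous_on {0..} h \<and> (\<forall>\<tau>>0. h \<tau> = p \<tau> \<sigma>))"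

lemma ext_p_ex:
  assumes "W1inf p"
  shows "\<exists>h. continuous_on {0..} h \<and> (\<forall>\<tau>>0. h \<tau> = p \<tau> \<sigma>)"
proof -
  obtain L where L: "L-lipschitz_on ({0<..} \<times> UNIV) (\<lambda>(s,S). p s S)"
    using assms unfolding W1inf_def by blast
  have "L-lipschitz_on {0<..} (\<lambda>\<tau>. p \<tau> \<sigma>)"
  proof (rule lipschitz_onI)
    show "0 \<le> L" using L lipschitz_on_nonneg by blast
    fix x y :: real assume "x \<in> {0<..}" "y \<in> {0<..}"
    then have "dist ((\<lambda>(s,S). p s S) (x,\<sigma>)) ((\<lambda>(s,S). p s S) (y,\<sigma>)) \<le> L * dist (x,\<sigma>) (y,\<sigma>)"
      by (intro lipschitz_onD[OF L]) auto
    then show "dist (p x \<sigma>) (p y \<sigma>) \<le> L * dist x y"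
      by (simp add: dist_Pair_Pair)
  qed
  then have "uniformly_continuous_on {0<..} (\<lambda>\<tau>. p \<tau> \<sigma>)"
    by (rule lipschitz_on_uniformly_continuous)
  then obtain h where h: "uniformly_continuous_on (closure {0<..}) h" "\<And>x. x \<in> {0<..} \<Longrightarrow> p x \<sigma> = h x"
    by (rule uniformly_continuous_on_extension_on_closure) blast
  have "closure {0<..} = ({0..} :: real set)" by simp
  with h show ?thesis
    by (intro exI[of _ h]) (auto intro: uniformly_continuous_imp_continuous)
qed

lemma ext_p:
  assumes "W1inf p"
  shows "continuous_on {0..} (ext_p p \<sigma>)" "\<And>\<tau>. \<tau> > 0 \<Longrightarrow> ext_p p \<sigma> \<tau> = p \<tau> \<sigma>"
  using someI_ex[OF ext_p_ex[OF assms, of \<sigma>]] unfolding ext_p_def by auto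

lemma closure_ext:
  fixes h :: "real \<Rightarrow> real"
  assumes "continuous_on {0..} h" "closed K" "\<And>\<tau>. \<tau> > 0 \<Longrightarrow> h \<tau> \<in> K" "\<tau> \<ge> 0"
  shows "h \<tau> \<in> K"
proof -
  have c: "closure {0<..} = ({0..} :: real set)" by simp
  have "h ` closure {0<..} \<subseteq> K"
    by (rule image_closure_subset) (use assms c in auto)
  then show ?thesis using assms(4) c by auto
qed

lemma ext_p_bounds:
  assumes W: "W1inf p" and pb: "\<forall>s>0. \<forall>S'. pl \<le> p s S' \<and> p s S' \<le> pu" and t: "\<tau> \<ge> 0"
  shows "pl \<le> ext_p p \<sigma> \<tau> \<and> ext_p p \<sigma> \<tau> \<le> pu"
proof -
  have "ext_p p \<sigma> \<tau> \<in> {pl..pu}"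
  proof (rule closure_ext[where h="ext_p p \<sigma>"])
    show "continuous_on {0..} (ext_p p \<sigma>)" by (rule ext_p(1)[OF W])
    show "closed {pl..pu}" by simp
    show "ext_p p \<sigma> t \<in> {pl..pu}" if "t > 0" for t
      using ext_p(2)[OF W that] pb that by auto
    show "\<tau> \<ge> 0" by (rule t)
  qed
  then show ?thesis by simp
qed

lemma ext_p_lip:
  assumes W: "W1inf p" and dS: "dS_bound p \<delta>" and t: "\<tau> \<ge> 0"
  shows "\<bar>ext_p p a \<tau> - ext_p p b \<tau>\<bar> \<le> \<delta> * \<bar>a - b\<bar>"
proof -
  have "(\<lambda>t. ext_p p a t - ext_p p b t) \<tau> \<in> {- (\<delta> * \<bar>a - b\<bar>) .. \<delta> * \<bar>a - b\<bar>}"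
  proof (rule closure_ext[where h="\<lambda>t. ext_p p a t - ext_p p b t"])
    show "continuous_on {0..} (\<lambda>t. ext_p p a t - ext_p p b t)"
      by (intro continuous_intros ext_p(1)[OF W])
    show "closed {- (\<delta> * \<bar>a - b\<bar>) .. \<delta> * \<bar>a - b\<bar>}" by simp
    show "(\<lambda>t. ext_p p a t - ext_p p b t) t \<in> {- (\<delta> * \<bar>a - b\<bar>)..\<delta> * \<bar>a - b\<bar>}" if "t > 0" for t
    proof -
      have "\<bar>p t a - p t b\<bar> \<le> \<delta> * \<bar>a - b\<bar>" using dS that unfolding dS_bound_def by blast
      then show ?thesis using ext_p(2)[OF W that, of a] ext_p(2)[OF W that, of b] by (auto simp: abs_le_iff)
    qed
    show "\<tau> \<ge> 0" by (rule t)
  qed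
  then show ?thesis by (simp add: abs_le_iff)
qed

definition Pint :: "(real \<Rightarrow> real \<Rightarrow> real) \<Rightarrow> real \<Rightarrow> real \<Rightarrow> real" where
  "Pint p \<sigma> s = integral {0..s} (ext_p p \<sigma>)"

lemma Pint_basic:
  assumes W: "W1inf p"
  shows "Pint p \<sigma> 0 = 0"
    and "\<And>s. s > 0 \<Longrightarrow> (Pint p \<sigma> has_real_derivative p s \<sigma>) (at s)"
    and "\<And>T. continuous_on {0..T} (Pint p \<sigma>)"
proof -
  show "Pint p \<sigma> 0 = 0" by (simp add: Pint_def)
  have c: "continuous_on {0..b} (ext_p p \<sigma>)" for b
    using ext_p(1)[OF W] by (rule continuous_on_subset) auto
  fix s :: real assume s: "s > 0"
  have "(Pint p \<sigma> has_real_derivative ext_p p \<sigma> s) (at s within {0..s+1})"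
    unfolding Pint_def by (rule integral_has_real_derivative[OF c]) (use s in auto)
  moreover have "at s within {0..s+1} = at s"
    by (rule at_within_interior) (use s in auto)
  ultimately show "(Pint p \<sigma> has_real_derivative p s \<sigma>) (at s)"
    using ext_p(2)[OF W s] by simp
next
  fix T :: real
  have c: "continuous_on {0..b} (ext_p p \<sigma>)" for b
    using ext_p(1)[OF W] by (rule continuous_on_subset) auto
  show "continuous_on {0..T} (Pint p \<sigma>)"
    unfolding Pint_def
    by (rule DERIV_continuous_on) (rule integral_has_real_derivative[OF c], auto)
qed

lemma Pint_bounds:
  assumes W: "W1inf p" and pb: "\<forall>s>0. \<forall>S'. pl \<le> p s S' \<and> p s S' \<le> pu" and s: "s \<ge> 0"
  shows "pl * s \<le> Pint p \<sigma> s \<and> Pint p \<sigma> s \<le> pu * s"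
proof -
  have c: "continuous_on {0..s} (ext_p p \<sigma>)"
    using ext_p(1)[OF W] by (rule continuous_on_subset) auto
  have i: "ext_p p \<sigma> integrable_on {0..s}" by (rule integrable_continuous_real[OF c])
  have "integral {0..s} (\<lambda>_. pl) \<le> integral {0..s} (ext_p p \<sigma>)"
    by (rule integral_le) (use i ext_p_bounds[OF W pb] in auto)
  moreover have "integral {0..s} (ext_p p \<sigma>) \<le> integral {0..s} (\<lambda>_. pu)"
    by (rule integral_le) (use i ext_p_bounds[OF W pb] in auto)
  ultimately show ?thesis using s by (simp add: Pint_def mult.commute)
qed

lemma Pint_lip:
  assumes W: "W1inf p" and dS: "dS_bound p \<delta>" and s: "s \<ge> 0"
  shows "\<bar>Pint p a s - Pint p b s\<bar> \<le> \<delta> * \<bar>a - b\<bar> * s"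
proof -
  have c: "continuous_on {0..s} (ext_p p \<sigma>)" for \<sigma>
    using ext_p(1)[OF W] by (rule continuous_on_subset) auto
  have i: "ext_p p \<sigma> integrable_on {0..s}" for \<sigma> by (rule integrable_continuous_real[OF c])
  have d: "Pint p a s - Pint p b s = integral {0..s} (\<lambda>t. ext_p p a t - ext_p p b t)"
    unfolding Pint_def by (rule integral_diff[OF i i, symmetric])
  have id: "(\<lambda>t. ext_p p a t - ext_p p b t) integrable_on {0..s}" by (intro integrable_diff i)
  have "integral {0..s} (\<lambda>t. ext_p p a t - ext_p p b t) \<le> integral {0..s} (\<lambda>_. \<delta> * \<bar>a - b\<bar>)"
  proof (rule integral_le)
    fix x assume "x \<in> {0..s}"
    then show "ext_p p a x - ext_p p b x \<le> \<delta> * \<bar>a - b\<bar>" using ext_p_lip[OF W dS, of x a b] by (auto simp: abs_le_iff)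
  qed (simp_all add: id integrable_on_const)
  moreover have "integral {0..s} (\<lambda>_. - (\<delta> * \<bar>a - b\<bar>)) \<le> integral {0..s} (\<lambda>t. ext_p p a t - ext_p p b t)"
  proof (rule integral_le)
    fix x assume "x \<in> {0..s}"
    then show "- (\<delta> * \<bar>a - b\<bar>) \<le> ext_p p a x - ext_p p b x" using ext_p_lip[OF W dS, of x a b] by (auto simp: abs_le_iff)
  qed (simp_all add: id integrable_on_const)
  ultimately show ?thesis using s d by (simp add: abs_le_iff mult_ac)
qed




lemma abs_set_int_bound:
  fixes f h :: "'b::euclidean_space \<Rightarrow> real"
  assumes "set_integrable lborel A f" "set_integrable lborel A h" "\<And>x. x \<in> A \<Longrightarrow> \<bar>f x\<bar> \<le> h x"
  shows "\<bar>LINT x:A|lborel. f x\<bar> \<le> (LINT x:A|lborel. h x)"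
proof -
  have "\<bar>LINT x:A|lborel. f x\<bar> \<le> (LINT x:A|lborel. \<bar>f x\<bar>)"
    using set_integral_norm_bound[OF assms(1)] by simp
  also have "\<dots> \<le> (LINT x:A|lborel. h x)"
    by (rule set_integral_mono[OF set_integrable_abs[OF assms(1)] assms(2) assms(3)])
  finally show ?thesis .
qed

definition Ef :: "(real \<Rightarrow> real \<Rightarrow> real) \<Rightarrow> real \<Rightarrow> real \<Rightarrow> real" where
  "Ef p \<sigma> s = exp (- Pint p \<sigma> s)"

definition Phi :: "(real \<Rightarrow> real \<Rightarrow> real) \<Rightarrow> real \<Rightarrow> real" where
  "Phi p \<sigma> = (LINT s:{0<..}|lborel. Ef p \<sigma> s)"

definition Fp :: "(real \<Rightarrow> real \<Rightarrow> real) \<Rightarrow> real \<Rightarrow> real" where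
  "Fp p \<sigma> = 1 / Phi p \<sigma>"

lemma exp_moment_int:
  fixes c :: real
  assumes "0 < c"
  shows "set_integrable lborel {0<..} (\<lambda>s. s ^ k * exp (- c * s))"
    "(LINT s:{0<..}|lborel. s ^ k * exp (- c * s)) = fact k / c ^ Suc k"
  using exp_moment[OF assms, of k] unfolding has_bochner_integral_iff set_integrable_def set_lebesgue_integral_def by simp_all

lemma exp_int:
  fixes c :: real
  assumes "0 < c"
  shows "set_integrable lborel {0<..} (\<lambda>s. exp (- c * s))"
    "(LINT s:{0<..}|lborel. exp (- c * s)) = 1 / c"
  using exp_moment_int[OF assms, of 0] by auto

lemma Ef_cont: assumes W: "W1inf p" shows "continuous_on {0<..} (Ef p \<sigma>)"
proof -
  have "continuous_on {0<..} (Pint p \<sigma>)"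
    by (rule continuous_at_imp_continuous_on)
       (auto intro: DERIV_isCont Pint_basic(2)[OF W])
  then show ?thesis unfolding Ef_def by (intro continuous_intros)
qed

lemma Ef_meas: assumes W: "W1inf p"
  shows "set_borel_measurable lborel {0<..} (Ef p \<sigma>)"
  unfolding set_borel_measurable_def
  using borel_measurable_continuous_on_indicator[OF _ Ef_cont[OF W]] by simp

lemma Ef_bounds:
  assumes W: "W1inf p" and pb: "\<forall>s>0. \<forall>S'. pl \<le> p s S' \<and> p s S' \<le> pu" and s: "s \<ge> 0"
  shows "exp (- pu * s) \<le> Ef p \<sigma> s \<and> Ef p \<sigma> s \<le> exp (- pl * s)"
  using Pint_bounds[OF W pb s, of \<sigma>] by (simp add: Ef_def)

lemma exp_diff_bound:
  fixes u v m :: real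
  assumes "m \<le> u" "m \<le> v"
  shows "\<bar>exp (- u) - exp (- v)\<bar> \<le> exp (- m) * \<bar>u - v\<bar>"
proof -
  have key: "exp (- u) - exp (- v) \<le> exp (- m) * (v - u)" if "m \<le> u" "u \<le> v" for u v
  proof -
    have "exp (- u) - exp (- v) = exp (- u) * (1 - exp (- (v - u)))"
      by (simp add: algebra_simps exp_add[symmetric])
    also have "\<dots> \<le> exp (- u) * (v - u)"
    proof (intro mult_left_mono)
      have "1 - exp (u - v) \<le> v - u" using exp_ge_add_one_self[of "u - v"] by linarith
      then show "1 - exp (- (v - u)) \<le> v - u" by simp
    qed simp
    also have "\<dots> \<le> exp (- m) * (v - u)"
      using that by (intro mult_right_mono) auto
    finally show ?thesis .
  qed
  show ?thesis
  proof (cases "u \<le> v")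
    case True
    then show ?thesis using key[OF assms(1) True] by (simp add: abs_if)
  next
    case False
    then show ?thesis using key[OF assms(2), of u] by (simp add: abs_if)
  qed
qed

lemma Ef_lip:
  assumes W: "W1inf p" and pb: "\<forall>s>0. \<forall>S'. pl \<le> p s S' \<and> p s S' \<le> pu" and dS: "dS_bound p \<delta>" and s: "s \<ge> 0"
  shows "\<bar>Ef p a s - Ef p b s\<bar> \<le> \<delta> * \<bar>a - b\<bar> * (s * exp (- pl * s))"
proof -
  have "\<bar>Ef p a s - Ef p b s\<bar> \<le> exp (- (pl * s)) * \<bar>Pint p a s - Pint p b s\<bar>"
    unfolding Ef_def
    by (rule exp_diff_bound) (use Pint_bounds[OF W pb s] in auto)
  also have "\<dots> \<le> exp (- (pl * s)) * (\<delta> * \<bar>a - b\<bar> * s)"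
    by (intro mult_left_mono Pint_lip[OF W dS s]) auto
  finally show ?thesis by (simp add: mult_ac)
qed

lemma Ef_int:
  assumes W: "W1inf p" and pb: "\<forall>s>0. \<forall>S'. pl \<le> p s S' \<and> p s S' \<le> pu" and pl: "pl > 0"
  shows "set_integrable lborel {0<..} (Ef p \<sigma>)"
proof (rule set_integrable_bound[OF exp_int(1)[OF pl] Ef_meas[OF W]])
  show "AE x in lborel. x \<in> {0<..} \<longrightarrow> norm (Ef p \<sigma> x) \<le> norm (exp (- pl * x))"
    using Ef_bounds[OF W pb] by (auto simp: Ef_def)
qed

lemma Phi_bounds:
  assumes W: "W1inf p" and pb: "\<forall>s>0. \<forall>S'. pl \<le> p s S' \<and> p s S' \<le> pu" and pl: "pl > 0"
  shows "1 / pu \<le> Phi p \<sigma> \<and> Phi p \<sigma> \<le> 1 / pl"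
proof -
  have pu: "pu > 0" using pb pl by (metis less_add_one less_le_trans order_less_le_trans)
  have "(LINT s:{0<..}|lborel. exp (- pu * s)) \<le> Phi p \<sigma>"
    unfolding Phi_def
    by (rule set_integral_mono[OF exp_int(1)[OF pu] Ef_int[OF W pb pl]]) (use Ef_bounds[OF W pb] in auto)
  moreover have "Phi p \<sigma> \<le> (LINT s:{0<..}|lborel. exp (- pl * s))"
    unfolding Phi_def
    by (rule set_integral_mono[OF Ef_int[OF W pb pl] exp_int(1)[OF pl]]) (use Ef_bounds[OF W pb] in auto)
  ultimately show ?thesis using exp_int(2)[OF pu] exp_int(2)[OF pl] by simp
qed

lemma Phi_lip:
  assumes W: "W1inf p" and pb: "\<forall>s>0. \<forall>S'. pl \<le> p s S' \<and> p s S' \<le> pu" and pl: "pl > 0"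
    and dS: "dS_bound p \<delta>"
  shows "\<bar>Phi p a - Phi p b\<bar> \<le> \<delta> * \<bar>a - b\<bar> / pl ^ 2"
proof -
  have "\<bar>Phi p a - Phi p b\<bar> = \<bar>LINT s:{0<..}|lborel. Ef p a s - Ef p b s\<bar>"
    unfolding Phi_def using set_integral_diff(2)[OF Ef_int[OF W pb pl] Ef_int[OF W pb pl]] by simp
  also have "\<dots> \<le> (LINT s:{0<..}|lborel. \<delta> * \<bar>a - b\<bar> * (s ^ 1 * exp (- pl * s)))"
    by (rule abs_set_int_bound)
       (use Ef_int[OF W pb pl] exp_moment_int(1)[OF pl, of 1] Ef_lip[OF W pb dS] in auto)
  also have "\<dots> = \<delta> * \<bar>a - b\<bar> / pl ^ 2"
    using exp_moment_int(2)[OF pl, of 1] by (simp add: power2_eq_square)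
  finally show ?thesis .
qed




lemma Fp_pos_aux:
  assumes W: "W1inf p" and pb: "\<forall>s>0. \<forall>S'. pl \<le> p s S' \<and> p s S' \<le> pu" and pl: "pl > 0"
  shows "Phi p \<sigma> > 0" "pu > 0"
proof -
  have "pl \<le> pu" using pb[rule_format, of 1 0] by simp
  then show pu: "pu > 0" using pl by simp
  have "1 / pu \<le> Phi p \<sigma>" using Phi_bounds[OF W pb pl, of \<sigma>] by simp
  moreover have "1 / pu > 0" using pu by simp
  ultimately show "Phi p \<sigma> > 0" by linarith
qed

lemma ode_sol:
  assumes W: "W1inf p" and pb: "\<forall>s>0. \<forall>S'. pl \<le> p s S' \<and> p s S' \<le> pu" and pl: "pl > 0"
    and cont: "continuous_on {0..} m"
    and der: "\<forall>s>0. (m has_real_derivative (- p s \<sigma> * m s)) (at s)"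
    and int: "set_integrable lborel {0<..} m"
    and gx: "(LINT s:{0<..}|lborel. m s) = gx"
  shows "m 0 = gx * Fp p \<sigma>" and "\<And>s. s \<ge> 0 \<Longrightarrow> m s = m 0 * Ef p \<sigma> s"
proof -
  define h where "h s = m s * exp (Pint p \<sigma> s)" for s
  have dh: "(h has_real_derivative 0) (at s)" if "s > 0" for s
  proof -
    have "(h has_real_derivative (- p s \<sigma> * m s) * exp (Pint p \<sigma> s) + (exp (Pint p \<sigma> s) * p s \<sigma>) * m s) (at s)"
      unfolding h_def
      by (intro DERIV_mult der[rule_format, OF that] DERIV_chain2[OF DERIV_exp] Pint_basic(2)[OF W that])
    then show ?thesis by (rule DERIV_cong) (simp add: algebra_simps)
  qed
  have ch: "continuous_on {0..T} h" for T
  proof -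
    have "continuous_on {0..T} m" using cont by (rule continuous_on_subset) auto
    then show ?thesis unfolding h_def by (intro continuous_intros Pint_basic(3)[OF W])
  qed
  have hc: "h s = h 0" if "s \<ge> 0" for s
  proof -
    have "h 0 \<le> h s"
      by (rule DERIV_nonneg_imp_increasing_open[OF that _ ch]) (use dh in blast)
    moreover have "h s \<le> h 0"
      by (rule DERIV_nonpos_imp_decreasing_open[OF that _ ch]) (use dh in blast)
    ultimately show ?thesis by simp
  qed
  have h0: "h 0 = m 0" by (simp add: h_def Pint_basic(1)[OF W])
  show ms: "m s = m 0 * Ef p \<sigma> s" if "s \<ge> 0" for s
  proof -
    have e: "m s * exp (Pint p \<sigma> s) = m 0" using hc[OF that] h0 unfolding h_def by simp
    then have "m s = m 0 / exp (Pint p \<sigma> s)" by (simp add: eq_divide_eq)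
    then show ?thesis by (simp add: Ef_def exp_minus divide_inverse)
  qed
  have "gx = (LINT s:{0<..}|lborel. m 0 * Ef p \<sigma> s)"
    unfolding gx[symmetric]
  proof (rule set_lebesgue_integral_cong)
    show "\<forall>s. s \<in> {0<..} \<longrightarrow> m s = m 0 * Ef p \<sigma> s"
    proof (intro allI impI)
      fix s :: real assume "s \<in> {0<..}"
      then have "s \<ge> 0" by simp
      then show "m s = m 0 * Ef p \<sigma> s" by (rule ms)
    qed
  qed simp
  also have "\<dots> = m 0 * Phi p \<sigma>" by (simp add: Phi_def)
  finally have "gx = m 0 * Phi p \<sigma>" .
  moreover have "Phi p \<sigma> > 0"
    using Fp_pos_aux[OF W pb pl] by blast
  ultimately show "m 0 = gx * Fp p \<sigma>" by (simp add: Fp_def)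
qed

lemma Fp_bounds:
  assumes W: "W1inf p" and pb: "\<forall>s>0. \<forall>S'. pl \<le> p s S' \<and> p s S' \<le> pu" and pl: "pl > 0"
  shows "pl \<le> Fp p \<sigma> \<and> Fp p \<sigma> \<le> pu"
proof -
  have pu: "pu > 0" using Fp_pos_aux[OF W pb pl] by blast
  from Phi_bounds[OF W pb pl, of \<sigma>] have a: "1 / pu \<le> Phi p \<sigma>" and b: "Phi p \<sigma> \<le> 1 / pl" by auto
  have P: "Phi p \<sigma> > 0" using Fp_pos_aux[OF W pb pl] by blast
  have "pl \<le> 1 / Phi p \<sigma>" using b P pl by (simp add: field_simps)
  moreover have "1 / Phi p \<sigma> \<le> pu" using a P pu by (simp add: field_simps)
  ultimately show ?thesis by (simp add: Fp_def)
qed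

lemma Fp_lip:
  assumes W: "W1inf p" and pb: "\<forall>s>0. \<forall>S'. pl \<le> p s S' \<and> p s S' \<le> pu" and pl: "pl > 0"
    and dS: "dS_bound p \<delta>"
  shows "\<bar>Fp p a - Fp p b\<bar> \<le> (pu ^ 2 / pl ^ 2) * \<delta> * \<bar>a - b\<bar>"
proof -
  have pu: "pu > 0" using Fp_pos_aux[OF W pb pl] by blast
  have Pa: "1 / pu \<le> Phi p a" and Pb: "1 / pu \<le> Phi p b" using Phi_bounds[OF W pb pl] by auto
  have Pa0: "Phi p a > 0" and Pb0: "Phi p b > 0" using Fp_pos_aux[OF W pb pl] by blast+
  have "\<bar>Fp p a - Fp p b\<bar> = \<bar>Phi p b - Phi p a\<bar> / (Phi p a * Phi p b)"
  proof -
    have "Fp p a - Fp p b = (Phi p b - Phi p a) / (Phi p a * Phi p b)"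
      using Pa0 Pb0 unfolding Fp_def by (simp add: diff_divide_distrib)
    then show ?thesis using Pa0 Pb0 by (simp add: abs_div)
  qed
  also have "\<dots> \<le> \<bar>Phi p b - Phi p a\<bar> * (pu * pu)"
  proof -
    have "1 / (Phi p a * Phi p b) \<le> pu * pu"
    proof -
      have "(1 / pu) * (1 / pu) \<le> Phi p a * Phi p b" using Pa Pb pu Pa0 by (intro mult_mono) auto
      then show ?thesis using pu Pa0 Pb0 by (simp add: field_simps)
    qed
    then show ?thesis using mult_left_mono[of "1 / (Phi p a * Phi p b)" "pu * pu" "\<bar>Phi p b - Phi p a\<bar>"]
      by simp
  qed
  also have "\<dots> \<le> (\<delta> * \<bar>b - a\<bar> / pl ^ 2) * (pu * pu)"
    by (intro mult_right_mono Phi_lip[OF W pb pl dS]) auto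
  finally show ?thesis by (simp add: power2_eq_square abs_minus_commute mult_ac)
qed




lemma static_int_bound:
  fixes \<Omega> :: "'a::euclidean_space set" and g :: "'a \<Rightarrow> real" and f :: "'a \<Rightarrow> real"
  assumes fi: "set_integrable lborel \<Omega> f" and gi: "set_integrable lborel \<Omega> g"
    and gm: "(LINT x:\<Omega>|lborel. g x) = 1"
    and b: "\<And>y. y \<in> \<Omega> \<Longrightarrow> \<bar>f y\<bar> \<le> K * g y"
  shows "\<bar>LINT y:\<Omega>|lborel. f y\<bar> \<le> K"
proof -
  have "\<bar>LINT y:\<Omega>|lborel. f y\<bar> \<le> (LINT y:\<Omega>|lborel. K * g y)"
    by (rule abs_set_int_bound[OF fi _ b]) (use gi in auto)
  also have "\<dots> = K" using gm by simp
  finally show ?thesis .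
qed

lemma static_cmp:
  fixes \<Omega> :: "'a::euclidean_space set" and g I :: "'a \<Rightarrow> real"
    and w1 w2 :: "'a \<Rightarrow> 'a \<Rightarrow> real" and N1 N2 S1 S2 :: "'a \<Rightarrow> real" and F :: "real \<Rightarrow> real"
  assumes ne: "\<Omega> \<noteq> {}"
    and i1: "\<And>x. x \<in> \<Omega> \<Longrightarrow> set_integrable lborel \<Omega> (\<lambda>y. w1 x y * N1 y) \<and> S1 x = (LINT y:\<Omega>|lborel. w1 x y * N1 y) + I x"
    and i2: "\<And>x. x \<in> \<Omega> \<Longrightarrow> set_integrable lborel \<Omega> (\<lambda>y. w2 x y * N2 y) \<and> S2 x = (LINT y:\<Omega>|lborel. w2 x y * N2 y) + I x"
    and N1: "\<And>x. x \<in> \<Omega> \<Longrightarrow> N1 x = g x * F (S1 x)"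
    and N2: "\<And>x. x \<in> \<Omega> \<Longrightarrow> N2 x = g x * F (S2 x)"
    and g0: "\<And>x. x \<in> \<Omega> \<Longrightarrow> 0 \<le> g x" and gi: "set_integrable lborel \<Omega> g"
    and gm: "(LINT x:\<Omega>|lborel. g x) = 1"
    and Fb: "\<And>v. 0 \<le> F v \<and> F v \<le> Fm"
    and FL: "\<And>u v. \<bar>F u - F v\<bar> \<le> L * \<bar>u - v\<bar>"
    and W1: "\<And>x y. x \<in> \<Omega> \<Longrightarrow> y \<in> \<Omega> \<Longrightarrow> \<bar>w1 x y\<bar> \<le> c1"
    and W2: "\<And>x y. x \<in> \<Omega> \<Longrightarrow> y \<in> \<Omega> \<Longrightarrow> \<bar>w2 x y\<bar> \<le> c2"
    and d: "\<And>x y. x \<in> \<Omega> \<Longrightarrow> y \<in> \<Omega> \<Longrightarrow> \<bar>w1 x y - w2 x y\<bar> \<le> d"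
    and small: "c2 * L \<le> 1/2" and L0: "0 \<le> L"
  shows "\<And>x. x \<in> \<Omega> \<Longrightarrow> \<bar>S1 x - S2 x\<bar> \<le> 2 * Fm * d"
proof -
  obtain x0 where x0: "x0 \<in> \<Omega>" using ne by blast
  have Fm0: "0 \<le> Fm" using Fb[of 0] by linarith
  have d0: "0 \<le> d" using d[OF x0 x0] by linarith
  have c20: "0 \<le> c2" using W2[OF x0 x0] by linarith
  have c10: "0 \<le> c1" using W1[OF x0 x0] by linarith
  have bS1: "\<bar>S1 x - I x\<bar> \<le> c1 * Fm" if x: "x \<in> \<Omega>" for x
  proof -
    have "\<bar>LINT y:\<Omega>|lborel. w1 x y * N1 y\<bar> \<le> c1 * Fm"
    proof (rule static_int_bound[OF conjunct1[OF i1[OF x]] gi gm])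
      fix y assume y: "y \<in> \<Omega>"
      have "\<bar>w1 x y * N1 y\<bar> = \<bar>w1 x y\<bar> * (g y * F (S1 y))"
        using N1[OF y] g0[OF y] Fb[of "S1 y"] by (simp add: abs_mult)
      also have "\<dots> \<le> c1 * (g y * Fm)"
        using W1[OF x y] g0[OF y] Fb[of "S1 y"] c10 by (intro mult_mono) auto
      finally show "\<bar>w1 x y * N1 y\<bar> \<le> c1 * Fm * g y" by (simp add: mult_ac)
    qed
    then show ?thesis using i1[OF x] by simp
  qed
  have bS2: "\<bar>S2 x - I x\<bar> \<le> c2 * Fm" if x: "x \<in> \<Omega>" for x
  proof -
    have "\<bar>LINT y:\<Omega>|lborel. w2 x y * N2 y\<bar> \<le> c2 * Fm"
    proof (rule static_int_bound[OF conjunct1[OF i2[OF x]] gi gm])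
      fix y assume y: "y \<in> \<Omega>"
      have "\<bar>w2 x y * N2 y\<bar> = \<bar>w2 x y\<bar> * (g y * F (S2 y))"
        using N2[OF y] g0[OF y] Fb[of "S2 y"] by (simp add: abs_mult)
      also have "\<dots> \<le> c2 * (g y * Fm)"
        using W2[OF x y] g0[OF y] Fb[of "S2 y"] c20 by (intro mult_mono) auto
      finally show "\<bar>w2 x y * N2 y\<bar> \<le> c2 * Fm * g y" by (simp add: mult_ac)
    qed
    then show ?thesis using i2[OF x] by simp
  qed
  define D where "D x = \<bar>S1 x - S2 x\<bar>" for x
  define E where "E = Sup (D ` \<Omega>)"
  have bdd: "bdd_above (D ` \<Omega>)"
  proof (rule bdd_aboveI2)
    fix x assume x: "x \<in> \<Omega>"
    show "D x \<le> c1 * Fm + c2 * Fm" using bS1[OF x] bS2[OF x] unfolding D_def by linarith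
  qed
  have DE: "D x \<le> E" if "x \<in> \<Omega>" for x
    unfolding E_def by (rule cSup_upper) (use that bdd in auto)
  have E0: "0 \<le> E" using DE[OF x0] unfolding D_def by linarith
  have key: "D x \<le> d * Fm + c2 * L * E" if x: "x \<in> \<Omega>" for x
  proof -
    have "S1 x - S2 x = (LINT y:\<Omega>|lborel. w1 x y * N1 y - w2 x y * N2 y)"
      using i1[OF x] i2[OF x] set_integral_diff(2)[OF conjunct1[OF i1[OF x]] conjunct1[OF i2[OF x]]] by simp
    moreover have "\<bar>LINT y:\<Omega>|lborel. w1 x y * N1 y - w2 x y * N2 y\<bar> \<le> d * Fm + c2 * L * E"
    proof (rule static_int_bound[OF set_integral_diff(1)[OF conjunct1[OF i1[OF x]] conjunct1[OF i2[OF x]]] gi gm])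
      fix y assume y: "y \<in> \<Omega>"
      have e1: "\<bar>(w1 x y - w2 x y) * N1 y\<bar> \<le> d * (g y * Fm)"
      proof -
        have "\<bar>(w1 x y - w2 x y) * N1 y\<bar> = \<bar>w1 x y - w2 x y\<bar> * (g y * F (S1 y))"
          using N1[OF y] g0[OF y] Fb[of "S1 y"] by (simp add: abs_mult)
        also have "\<dots> \<le> d * (g y * Fm)"
          using d[OF x y] g0[OF y] Fb[of "S1 y"] d0 by (intro mult_mono) auto
        finally show ?thesis .
      qed
      have e2: "\<bar>w2 x y * (N1 y - N2 y)\<bar> \<le> c2 * (g y * (L * E))"
      proof -
        have "\<bar>w2 x y * (N1 y - N2 y)\<bar> = \<bar>w2 x y\<bar> * (g y * \<bar>F (S1 y) - F (S2 y)\<bar>)"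
          using N1[OF y] N2[OF y] g0[OF y] by (simp add: abs_mult right_diff_distrib[symmetric])
        also have "\<dots> \<le> c2 * (g y * (L * E))"
        proof (intro mult_mono)
          show "\<bar>F (S1 y) - F (S2 y)\<bar> \<le> L * E"
            using FL[of "S1 y" "S2 y"] DE[OF y] L0 unfolding D_def
            by (meson order_trans mult_left_mono)
        qed (use W2[OF x y] g0[OF y] c20 in auto)
        finally show ?thesis .
      qed
      have "w1 x y * N1 y - w2 x y * N2 y = (w1 x y - w2 x y) * N1 y + w2 x y * (N1 y - N2 y)"
        by (simp add: algebra_simps)
      then have "\<bar>w1 x y * N1 y - w2 x y * N2 y\<bar> \<le> d * (g y * Fm) + c2 * (g y * (L * E))"
        using e1 e2 abs_triangle_ineq[of "(w1 x y - w2 x y) * N1 y" "w2 x y * (N1 y - N2 y)"] by linarith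
      then show "\<bar>w1 x y * N1 y - w2 x y * N2 y\<bar> \<le> (d * Fm + c2 * L * E) * g y"
        by (simp add: algebra_simps)
    qed
    ultimately show ?thesis unfolding D_def by simp
  qed
  have "E \<le> d * Fm + c2 * L * E"
    unfolding E_def
  proof (rule cSup_least)
    show "D ` \<Omega> \<noteq> {}" using ne by simp
    fix z assume "z \<in> D ` \<Omega>"
    then obtain x where x: "x \<in> \<Omega>" and z: "z = D x" by blast
    show "z \<le> d * Fm + c2 * L * Sup (D ` \<Omega>)" using key[OF x] z unfolding E_def by simp
  qed
  moreover have "c2 * L * E \<le> (1/2) * E" using small E0 by (rule mult_right_mono)
  ultimately have "E \<le> 2 * Fm * d" by (simp add: algebra_simps)
  then show "\<And>x. x \<in> \<Omega> \<Longrightarrow> \<bar>S1 x - S2 x\<bar> \<le> 2 * Fm * d"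
  proof -
    fix x assume "x \<in> \<Omega>"
    then show "\<bar>S1 x - S2 x\<bar> \<le> 2 * Fm * d" using DE[of x] \<open>E \<le> 2 * Fm * d\<close> unfolding D_def by linarith
  qed
qed




lemma w_bound:
  fixes f k :: "real \<Rightarrow> real"
  assumes cont: "continuous_on {0..} f"
    and der: "\<And>t. 0 < t \<Longrightarrow> (f has_real_derivative (- f t + k t)) (at t)"
    and kb: "\<And>t. \<bar>k t\<bar> \<le> c" and t: "0 \<le> t"
  shows "\<bar>f t\<bar> \<le> \<bar>f 0\<bar> + c"
proof -
  have c0: "0 \<le> c" using kb[of 0] by linarith
  have "\<bar>f t\<bar> \<le> exp (- t) * \<bar>f 0\<bar> + c / (1 - 0) * (exp (- 0 * t) - exp (- t))"
  proof (rule ode_bound[where k=k and e=f and lam=0 and A=c and T=t])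
    show "continuous_on {0..t} f" using cont by (rule continuous_on_subset) auto
    show "(f has_real_derivative - f \<tau> + k \<tau>) (at \<tau>)" if "0 < \<tau>" "\<tau> < t" for \<tau>
      using der[OF that(1)] .
    show "\<bar>k \<tau>\<bar> \<le> c * exp (- 0 * \<tau>)" for \<tau> using kb[of \<tau>] by simp
  qed (use t c0 in simp_all)
  also have "\<dots> \<le> 1 * \<bar>f 0\<bar> + c * 1"
    using t c0 by (intro add_mono mult_mono) auto
  finally show ?thesis by simp
qed

lemma exp_half_cancel:
  fixes t a :: real
  shows "exp (- t / 2) * (exp (t / 2) * a) = a" "exp (t / 2) * (exp (- t / 2) * a) = a"
  by (simp_all add: mult.assoc[symmetric] exp_add[symmetric])

lemma sup_gronwall:
  fixes e k :: "real \<Rightarrow> 'b \<Rightarrow> real" and X :: "'b set"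
  assumes ne: "X \<noteq> {}"
    and bd: "\<And>t z. 0 \<le> t \<Longrightarrow> z \<in> X \<Longrightarrow> \<bar>e t z\<bar> \<le> M"
    and cont: "\<And>z. z \<in> X \<Longrightarrow> continuous_on {0..} (\<lambda>t. e t z)"
    and der: "\<And>z t. z \<in> X \<Longrightarrow> 0 < t \<Longrightarrow> ((\<lambda>t. e t z) has_real_derivative (- e t z + k t z)) (at t)"
    and kb: "\<And>t d. 0 < t \<Longrightarrow> (\<And>z. z \<in> X \<Longrightarrow> \<bar>e t z\<bar> \<le> d) \<Longrightarrow> (\<And>z. z \<in> X \<Longrightarrow> \<bar>k t z\<bar> \<le> \<theta> * d)"
    and th: "0 \<le> \<theta>" "\<theta> \<le> 1/4"
    and D0: "\<And>z. z \<in> X \<Longrightarrow> \<bar>e 0 z\<bar> \<le> D0"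
  shows "\<And>t z. 0 \<le> t \<Longrightarrow> z \<in> X \<Longrightarrow> \<bar>e t z\<bar> \<le> 2 * D0 * exp (- t / 2)"
proof -
  fix T :: real and z0 assume T: "0 \<le> T" and z0: "z0 \<in> X"
  define V where "V = (\<lambda>(t, z). exp (t / 2) * \<bar>e t z\<bar>) ` ({0..T} \<times> X)"
  define Q where "Q = Sup V"
  have Vne: "V \<noteq> {}" using ne T unfolding V_def by auto
  have bdd: "bdd_above V"
    unfolding V_def
  proof (rule bdd_aboveI2)
    fix tz assume "tz \<in> {0..T} \<times> X"
    then obtain t z where tz: "tz = (t, z)" "t \<in> {0..T}" "z \<in> X" by auto
    have "exp (t / 2) * \<bar>e t z\<bar> \<le> exp (T / 2) * M"
      using tz bd[of t z] by (intro mult_mono) auto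
    then show "(\<lambda>(t, z). exp (t / 2) * \<bar>e t z\<bar>) tz \<le> exp (T / 2) * M" using tz by simp
  qed
  have inV: "exp (t / 2) * \<bar>e t z\<bar> \<le> Q" if "t \<in> {0..T}" "z \<in> X" for t z
    unfolding Q_def by (rule cSup_upper[OF _ bdd]) (use that in \<open>auto simp: V_def\<close>)
  have Q0: "0 \<le> Q" 
  proof -
    have "0 \<le> exp (0 / 2) * \<bar>e 0 z0\<bar>" by simp
    also have "\<dots> \<le> Q" using inV[of 0 z0] z0 T by simp
    finally show ?thesis .
  qed
  have D00: "0 \<le> D0" using D0[OF z0] by linarith
  have each: "exp (t / 2) * \<bar>e t z\<bar> \<le> D0 + Q / 2" if t: "t \<in> {0..T}" and z: "z \<in> X" for t z
  proof -
    have kk: "\<bar>k \<tau> z\<bar> \<le> (\<theta> * Q) * exp (- (1/2) * \<tau>)" if "0 < \<tau>" "\<tau> < t" for \<tau>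
    proof -
      have "\<bar>e \<tau> z'\<bar> \<le> Q * exp (- \<tau> / 2)" if "z' \<in> X" for z'
      proof -
        have "exp (\<tau> / 2) * \<bar>e \<tau> z'\<bar> \<le> Q" using inV[of \<tau> z'] \<open>0 < \<tau>\<close> \<open>\<tau> < t\<close> t that by auto
        then have "exp (- \<tau> / 2) * (exp (\<tau> / 2) * \<bar>e \<tau> z'\<bar>) \<le> exp (- \<tau> / 2) * Q" by simp
        then have "\<bar>e \<tau> z'\<bar> \<le> exp (- \<tau> / 2) * Q" by (simp only: exp_half_cancel)
        then show ?thesis by (simp only: mult.commute)
      qed
      from kb[OF \<open>0 < \<tau>\<close> this z] show ?thesis by (simp add: mult_ac)
    qed
    have "\<bar>e t z\<bar> \<le> exp (- t) * \<bar>e 0 z\<bar> + (\<theta> * Q) / (1 - 1/2) * (exp (- (1/2) * t) - exp (- t))"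
    proof (rule ode_bound[where k="\<lambda>\<tau>. k \<tau> z" and e="\<lambda>\<tau>. e \<tau> z" and lam="1/2" and A="\<theta> * Q" and T=t])
      show "0 \<le> \<theta> * Q" using th Q0 by simp
      show "0 \<le> t" using t by simp
      show "continuous_on {0..t} (\<lambda>\<tau>. e \<tau> z)" using cont[OF z] by (rule continuous_on_subset) auto
      show "((\<lambda>\<tau>. e \<tau> z) has_real_derivative - e \<tau> z + k \<tau> z) (at \<tau>)" if "0 < \<tau>" "\<tau> < t" for \<tau>
        using der[OF z that(1)] .
      show "\<bar>k \<tau> z\<bar> \<le> \<theta> * Q * exp (- (1 / 2) * \<tau>)" if "0 < \<tau>" "\<tau> < t" for \<tau>
        using kk[OF that] .
    qed simp_all
    also have "\<dots> \<le> exp (- t / 2) * D0 + Q / 2 * exp (- t / 2)"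
    proof (rule add_mono)
      show "exp (- t) * \<bar>e 0 z\<bar> \<le> exp (- t / 2) * D0"
        using t D0[OF z] by (intro mult_mono) auto
      have "Q * (\<theta> * 4) \<le> Q * 1" using th Q0 by (intro mult_left_mono) auto
      then have "(\<theta> * Q) / (1 - 1/2) \<le> Q / 2" by (simp add: field_simps)
      moreover have "exp (- (1/2) * t) - exp (- t) \<le> exp (- t / 2)" by simp
      ultimately show "(\<theta> * Q) / (1 - 1/2) * (exp (- (1/2) * t) - exp (- t)) \<le> Q / 2 * exp (- t / 2)"
        using t th Q0 by (intro mult_mono) auto
    qed
    finally have "\<bar>e t z\<bar> \<le> exp (- t / 2) * (D0 + Q / 2)" by (simp add: algebra_simps)
    then have "exp (t / 2) * \<bar>e t z\<bar> \<le> exp (t / 2) * (exp (- t / 2) * (D0 + Q / 2))" by simp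
    also have "\<dots> = D0 + Q / 2" by (simp only: exp_half_cancel)
    finally show ?thesis .
  qed
  have "Q \<le> D0 + Q / 2"
    unfolding Q_def
  proof (rule cSup_least[OF Vne])
    fix v assume "v \<in> V"
    then obtain t z where "t \<in> {0..T}" "z \<in> X" "v = exp (t / 2) * \<bar>e t z\<bar>" unfolding V_def by auto
    then show "v \<le> D0 + Sup V / 2" using each unfolding Q_def by simp
  qed
  then have Q2: "Q \<le> 2 * D0" by simp
  have "exp (T / 2) * \<bar>e T z0\<bar> \<le> 2 * D0" using inV[of T z0] T z0 Q2 by simp
  then have "exp (- T / 2) * (exp (T / 2) * \<bar>e T z0\<bar>) \<le> exp (- T / 2) * (2 * D0)" by simp
  then have "\<bar>e T z0\<bar> \<le> exp (- T / 2) * (2 * D0)" by (simp only: exp_half_cancel)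
  then show "\<bar>e T z0\<bar> \<le> 2 * D0 * exp (- T / 2)" by (simp only: mult.commute)
qed




lemma L1_s_bound:
  assumes hi: "set_integrable lborel {0<..} h" and b: "\<And>s. s > 0 \<Longrightarrow> \<bar>f s\<bar> \<le> h s"
  shows "L1_s f \<le> ennreal (LINT s:{0<..}|lborel. h s)"
proof -
  have "L1_s f \<le> (\<integral>\<^sup>+ s. ennreal (indicator {0<..} s * h s) \<partial>lborel)"
    unfolding L1_s_def
  proof (rule nn_integral_mono)
    fix s :: real
    show "indicator {0<..} s * ennreal \<bar>f s\<bar> \<le> ennreal (indicator {0<..} s * h s)"
      using b[of s] by (auto simp: indicator_def)
  qed
  also have "\<dots> = ennreal (LINT s:{0<..}|lborel. h s)"
  proof -
    have "integrable lborel (\<lambda>s. indicator {0<..} s * h s)"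
      using hi unfolding set_integrable_def by simp
    moreover have "AE s in lborel. 0 \<le> indicator {0<..} s * h s"
      using b by (auto simp: indicator_def intro: order_trans[OF abs_ge_zero])
    ultimately show ?thesis
      by (simp add: nn_integral_eq_integral set_lebesgue_integral_def)
  qed
  finally show ?thesis .
qed

lemma L1_s_lower:
  assumes fi: "set_integrable lborel {0<..} f"
  shows "ennreal \<bar>LINT s:{0<..}|lborel. f s\<bar> \<le> L1_s f"
proof -
  have "\<bar>LINT s:{0<..}|lborel. f s\<bar> \<le> (LINT s:{0<..}|lborel. \<bar>f s\<bar>)"
    using set_integral_norm_bound[OF fi] by simp
  then have "ennreal \<bar>LINT s:{0<..}|lborel. f s\<bar> \<le> ennreal (LINT s:{0<..}|lborel. \<bar>f s\<bar>)"
    by (rule ennreal_leI)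
  also have "\<dots> = L1_s f"
  proof -
    have "L1_s f = (\<integral>\<^sup>+ s. ennreal (indicator {0<..} s * \<bar>f s\<bar>) \<partial>lborel)"
      unfolding L1_s_def by (rule nn_integral_cong) (auto simp: indicator_def)
    also have "\<dots> = ennreal (LINT s:{0<..}|lborel. \<bar>f s\<bar>)"
    proof -
      have "integrable lborel (\<lambda>s. indicator {0<..} s * \<bar>f s\<bar>)"
        using set_integrable_abs[OF fi] unfolding set_integrable_def by simp
      moreover have "AE s in lborel. 0 \<le> indicator {0<..} s * \<bar>f s\<bar>" by simp
      ultimately show ?thesis
        by (simp add: nn_integral_eq_integral set_lebesgue_integral_def)
    qed
    finally show ?thesis by simp
  qed
  finally show ?thesis .
qed

lemma L1_x_bound:
  fixes \<Omega> :: "'a::euclidean_space set"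
  assumes "\<Omega> \<in> sets lborel" and b: "\<And>x. x \<in> \<Omega> \<Longrightarrow> \<bar>f x\<bar> \<le> c"
  shows "L1_x \<Omega> f \<le> ennreal c * emeasure lborel \<Omega>"
proof -
  have "L1_x \<Omega> f \<le> (\<integral>\<^sup>+ x. ennreal c * indicator \<Omega> x \<partial>lborel)"
    unfolding L1_x_def
    by (rule nn_integral_mono) (use b in \<open>auto simp: indicator_def intro: ennreal_leI\<close>)
  also have "\<dots> = ennreal c * emeasure lborel \<Omega>" by (rule nn_integral_cmult_indicator[OF assms(1)])
  finally show ?thesis .
qed

lemma L1_xy_bound:
  fixes \<Omega> :: "'a::euclidean_space set"
  assumes "\<Omega> \<in> sets lborel" and b: "\<And>x y. x \<in> \<Omega> \<Longrightarrow> y \<in> \<Omega> \<Longrightarrow> \<bar>f x y\<bar> \<le> c"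
  shows "L1_xy \<Omega> f \<le> ennreal c * emeasure lborel \<Omega> * emeasure lborel \<Omega>"
proof -
  have "L1_xy \<Omega> f \<le> (\<integral>\<^sup>+ x. (ennreal c * emeasure lborel \<Omega>) * indicator \<Omega> x \<partial>lborel)"
    unfolding L1_xy_def
  proof (rule nn_integral_mono)
    fix x
    show "indicator \<Omega> x * L1_x \<Omega> (f x) \<le> ennreal c * emeasure lborel \<Omega> * indicator \<Omega> x"
      using L1_x_bound[OF assms(1), of "f x" c] b[of x] by (auto simp: indicator_def)
  qed
  also have "\<dots> = ennreal c * emeasure lborel \<Omega> * emeasure lborel \<Omega>" by (rule nn_integral_cmult_indicator[OF assms(1)])
  finally show ?thesis .
qed

lemma L1_sx_bound:
  fixes \<Omega> :: "'a::euclidean_space set"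
  assumes "\<Omega> \<in> sets lborel" and b: "\<And>x. x \<in> \<Omega> \<Longrightarrow> L1_s (\<lambda>s. f s x) \<le> ennreal c"
  shows "L1_sx \<Omega> f \<le> ennreal c * emeasure lborel \<Omega>"
proof -
  have "L1_sx \<Omega> f \<le> (\<integral>\<^sup>+ x. ennreal c * indicator \<Omega> x \<partial>lborel)"
    unfolding L1_sx_def
    by (rule nn_integral_mono) (use b in \<open>auto simp: indicator_def\<close>)
  also have "\<dots> = ennreal c * emeasure lborel \<Omega>" by (rule nn_integral_cmult_indicator[OF assms(1)])
  finally show ?thesis .
qed

lemma L1_xy_pos:
  fixes \<Omega> :: "'a::euclidean_space set"
  assumes b: "\<And>x y. x \<in> cball x0 r \<Longrightarrow> y \<in> cball y0 r \<Longrightarrow> x \<in> \<Omega> \<and> y \<in> \<Omega> \<and> c \<le> \<bar>f x y\<bar>"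
    and r: "r > 0" and c: "c > 0"
  shows "L1_xy \<Omega> f > 0"
proof -
  define m where "m = emeasure lborel (cball x0 r)"
  have m0: "m > 0" unfolding m_def emeasure_cball[OF less_imp_le[OF r]] using r
    by (simp add: ennreal_zero_less_mult_iff)
  have m0': "emeasure lborel (cball y0 r) > 0" unfolding emeasure_cball[OF less_imp_le[OF r]] using r
    by (simp add: ennreal_zero_less_mult_iff)
  have inner: "ennreal c * emeasure lborel (cball y0 r) \<le> L1_x \<Omega> (f x)" if x: "x \<in> cball x0 r" for x
  proof -
    have "ennreal c * emeasure lborel (cball y0 r) = (\<integral>\<^sup>+ y. ennreal c * indicator (cball y0 r) y \<partial>lborel)"
      by (rule nn_integral_cmult_indicator[symmetric]) simp
    also have "\<dots> \<le> L1_x \<Omega> (f x)"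
      unfolding L1_x_def
      by (rule nn_integral_mono) (use b[OF x] in \<open>auto simp: indicator_def\<close>)
    finally show ?thesis .
  qed
  have "(ennreal c * emeasure lborel (cball y0 r)) * m = (\<integral>\<^sup>+ x. (ennreal c * emeasure lborel (cball y0 r)) * indicator (cball x0 r) x \<partial>lborel)"
    unfolding m_def by (rule nn_integral_cmult_indicator[symmetric]) simp
  also have "\<dots> \<le> L1_xy \<Omega> f"
    unfolding L1_xy_def
  proof (rule nn_integral_mono)
    fix x
    show "ennreal c * emeasure lborel (cball y0 r) * indicator (cball x0 r) x \<le> indicator \<Omega> x * L1_x \<Omega> (f x)"
    proof (cases "x \<in> cball x0 r")
      case True
      then have "x \<in> \<Omega>" using b[OF True, of y0] r by auto
      then show ?thesis using inner[OF True] True by (simp add: indicator_def)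
    qed simp
  qed
  finally have le: "(ennreal c * emeasure lborel (cball y0 r)) * m \<le> L1_xy \<Omega> f" .
  have "(ennreal c * emeasure lborel (cball y0 r)) * m > 0"
    using m0 m0' c by (simp add: ennreal_zero_less_mult_iff)
  then show ?thesis using le by (rule less_le_trans)
qed




lemma G_facts:
  fixes G :: "real \<times> real \<Rightarrow> real" and G' :: "real \<times> real \<Rightarrow> real \<times> real \<Rightarrow> real"
  assumes G_deriv: "\<And>z. (G has_derivative G' z) (at z)"
    and G_norm: "\<exists>a b. a + b \<le> 1 \<and> (\<forall>z. \<bar>G z\<bar> \<le> a) \<and> (\<forall>z. onorm (G' z) \<le> b)"
  shows "\<And>z. \<bar>G z\<bar> \<le> 1" "\<And>a b c d. \<bar>G (a, b) - G (c, d)\<bar> \<le> \<bar>a - c\<bar> + \<bar>b - d\<bar>"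
proof -
  obtain a b where ab: "a + b \<le> 1" "\<And>z. \<bar>G z\<bar> \<le> a" "\<And>z. onorm (G' z) \<le> b" using G_norm by blast
  have a0: "0 \<le> a" using ab(2)[of 0] by linarith
  have b0: "0 \<le> b" using ab(3)[of 0] onorm_pos_le[OF has_derivative_bounded_linear[OF G_deriv[of 0]]] by linarith
  show "\<And>z. \<bar>G z\<bar> \<le> 1" using ab a0 b0 by (meson add_increasing2 order_trans)
  fix a' b' c d :: real
  have "norm (G (a', b') - G (c, d)) \<le> b * norm ((a', b') - (c, d))"
    by (rule differentiable_bound[where S=UNIV and f'=G']) (use G_deriv ab(3) in auto)
  also have "\<dots> \<le> 1 * norm ((a', b') - (c, d))"
    using ab a0 b0 by (intro mult_right_mono) auto
  also have "\<dots> \<le> \<bar>a' - c\<bar> + \<bar>b' - d\<bar>" using norm_Pair_le[of "a' - c" "b' - d"] by simp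
  finally show "\<bar>G (a', b') - G (c, d)\<bar> \<le> \<bar>a' - c\<bar> + \<bar>b' - d\<bar>" by simp
qed

lemma stat_cont:
  fixes \<Omega> :: "'a::euclidean_space set" and g I Ns Ss :: "'a \<Rightarrow> real"
    and ws :: "'a \<Rightarrow> 'a \<Rightarrow> real" and F :: "real \<Rightarrow> real" and G :: "real \<times> real \<Rightarrow> real"
  assumes x: "x \<in> \<Omega>" and x': "x' \<in> \<Omega>"
    and i: "\<And>x. x \<in> \<Omega> \<Longrightarrow> set_integrable lborel \<Omega> (\<lambda>y. ws x y * Ns y) \<and> Ss x = (LINT y:\<Omega>|lborel. ws x y * Ns y) + I x"
    and Nf: "\<And>x. x \<in> \<Omega> \<Longrightarrow> Ns x = g x * F (Ss x)"
    and wsG: "\<And>x y. x \<in> \<Omega> \<Longrightarrow> y \<in> \<Omega> \<Longrightarrow> ws x y = \<gamma> * G (Ns x, Ns y)"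
    and GL: "\<And>a b c d. \<bar>G (a, b) - G (c, d)\<bar> \<le> \<bar>a - c\<bar> + \<bar>b - d\<bar>"
    and g0: "\<And>x. x \<in> \<Omega> \<Longrightarrow> 0 \<le> g x" and gB: "\<And>x. x \<in> \<Omega> \<Longrightarrow> g x \<le> B"
    and gi: "set_integrable lborel \<Omega> g" and gm: "(LINT x:\<Omega>|lborel. g x) = 1"
    and Fb: "\<And>v. 0 \<le> F v \<and> F v \<le> Fm"
    and FL: "\<And>u v. \<bar>F u - F v\<bar> \<le> L * \<bar>u - v\<bar>"
    and \<gamma>: "0 \<le> \<gamma>" and small: "B * L * \<gamma> * Fm \<le> 1/2" "B * L \<le> 1" and L0: "0 \<le> L"
  shows "\<bar>Ns x - Ns x'\<bar> \<le> 2 * Fm * \<bar>g x - g x'\<bar> + 2 * \<bar>I x - I x'\<bar>"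
proof -
  have Fm0: "0 \<le> Fm" using Fb[of 0] by linarith
  have dS: "\<bar>Ss x - Ss x'\<bar> \<le> \<gamma> * Fm * \<bar>Ns x - Ns x'\<bar> + \<bar>I x - I x'\<bar>"
  proof -
    have "Ss x - Ss x' = (LINT y:\<Omega>|lborel. ws x y * Ns y - ws x' y * Ns y) + (I x - I x')"
      using i[OF x] i[OF x'] set_integral_diff(2)[OF conjunct1[OF i[OF x]] conjunct1[OF i[OF x']]] by simp
    moreover have "\<bar>LINT y:\<Omega>|lborel. ws x y * Ns y - ws x' y * Ns y\<bar> \<le> \<gamma> * Fm * \<bar>Ns x - Ns x'\<bar>"
    proof (rule static_int_bound[OF set_integral_diff(1)[OF conjunct1[OF i[OF x]] conjunct1[OF i[OF x']]] gi gm])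
      fix y assume y: "y \<in> \<Omega>"
      have "\<bar>ws x y * Ns y - ws x' y * Ns y\<bar> = \<bar>ws x y - ws x' y\<bar> * (g y * F (Ss y))"
        using Nf[OF y] g0[OF y] Fb[of "Ss y"] by (simp add: abs_mult left_diff_distrib[symmetric])
      also have "\<dots> \<le> (\<gamma> * \<bar>Ns x - Ns x'\<bar>) * (g y * Fm)"
      proof (intro mult_mono)
        have "\<bar>ws x y - ws x' y\<bar> = \<gamma> * \<bar>G (Ns x, Ns y) - G (Ns x', Ns y)\<bar>"
          using wsG[OF x y] wsG[OF x' y] \<gamma> by (simp add: abs_mult right_diff_distrib[symmetric])
        also have "\<dots> \<le> \<gamma> * \<bar>Ns x - Ns x'\<bar>" using GL[of "Ns x" "Ns y" "Ns x'" "Ns y"] \<gamma> by (simp add: mult_left_mono)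
        finally show "\<bar>ws x y - ws x' y\<bar> \<le> \<gamma> * \<bar>Ns x - Ns x'\<bar>" .
      qed (use g0[OF y] Fb[of "Ss y"] \<gamma> in auto)
      finally show "\<bar>ws x y * Ns y - ws x' y * Ns y\<bar> \<le> \<gamma> * Fm * \<bar>Ns x - Ns x'\<bar> * g y" by (simp add: mult_ac)
    qed
    ultimately show ?thesis by linarith
  qed
  have dN: "\<bar>Ns x - Ns x'\<bar> \<le> Fm * \<bar>g x - g x'\<bar> + B * L * \<bar>Ss x - Ss x'\<bar>"
  proof -
    have "Ns x - Ns x' = (g x - g x') * F (Ss x) + g x' * (F (Ss x) - F (Ss x'))"
      using Nf[OF x] Nf[OF x'] by (simp add: algebra_simps)
    moreover have "\<bar>(g x - g x') * F (Ss x)\<bar> \<le> Fm * \<bar>g x - g x'\<bar>"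
    proof -
      have "\<bar>g x - g x'\<bar> * F (Ss x) \<le> \<bar>g x - g x'\<bar> * Fm" using Fb[of "Ss x"] by (intro mult_left_mono) auto
      then show ?thesis using Fb[of "Ss x"] by (simp add: abs_mult mult.commute)
    qed
    moreover have "\<bar>g x' * (F (Ss x) - F (Ss x'))\<bar> \<le> B * (L * \<bar>Ss x - Ss x'\<bar>)"
      using g0[OF x'] gB[OF x'] FL[of "Ss x" "Ss x'"] L0
      by (simp add: abs_mult) (intro mult_mono, auto)
    ultimately show ?thesis
      using abs_triangle_ineq[of "(g x - g x') * F (Ss x)" "g x' * (F (Ss x) - F (Ss x'))"] by (simp add: mult_ac)
  qed
  have BL0: "0 \<le> B * L" using gB[OF x] g0[OF x] L0 by simp
  have "B * L * \<bar>Ss x - Ss x'\<bar> \<le> B * L * (\<gamma> * Fm * \<bar>Ns x - Ns x'\<bar> + \<bar>I x - I x'\<bar>)"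
    by (rule mult_left_mono[OF dS BL0])
  also have "\<dots> = (B * L * \<gamma> * Fm) * \<bar>Ns x - Ns x'\<bar> + (B * L) * \<bar>I x - I x'\<bar>" by (simp add: algebra_simps)
  also have "\<dots> \<le> (1/2) * \<bar>Ns x - Ns x'\<bar> + 1 * \<bar>I x - I x'\<bar>"
    using small by (intro add_mono mult_right_mono) auto
  finally have "B * L * \<bar>Ss x - Ss x'\<bar> \<le> 1 / 2 * \<bar>Ns x - Ns x'\<bar> + 1 * \<bar>I x - I x'\<bar>" .
  moreover have "\<And>a f b c :: real. a \<le> f + b \<Longrightarrow> b \<le> 1/2 * a + 1 * c \<Longrightarrow> a \<le> 2 * f + 2 * c" by linarith
  ultimately have "\<bar>Ns x - Ns x'\<bar> \<le> 2 * (Fm * \<bar>g x - g x'\<bar>) + 2 * \<bar>I x - I x'\<bar>" using dN by blast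
  then show ?thesis by (simp add: mult.assoc)
qed




theorem mainTheorem12:
  fixes \<Omega> :: "'a::euclidean_space set"
    and I :: "'a \<Rightarrow> real"
    and G :: "real \<times> real \<Rightarrow> real"
    and G' :: "real \<times> real \<Rightarrow> real \<times> real \<Rightarrow> real"
    and n0 :: "real \<Rightarrow> 'a \<Rightarrow> real"
    and w0 :: "'a \<Rightarrow> 'a \<Rightarrow> real"
    and g :: "'a \<Rightarrow> real"
    and p_low p_inf :: real
  assumes dom: "bounded_domain \<Omega>"
    and I_cont: "continuous_on \<Omega> I" and I_bdd: "bounded (I ` \<Omega>)"
    and G_smooth: "smooth G"
    and G_deriv: "\<And>z. (G has_derivative G' z) (at z)"
    and G_norm: "\<exists>a b. a + b \<le> 1 \<and> (\<forall>z. \<bar>G z\<bar> \<le> a) \<and> (\<forall>z. onorm (G' z) \<le> b)"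
    and n0_reg: "Cb_L1s \<Omega> n0"
    and n0_nonneg: "\<And>s x. s > 0 \<Longrightarrow> x \<in> \<Omega> \<Longrightarrow> n0 s x \<ge> 0"
    and w0_cont: "continuous_on (\<Omega> \<times> \<Omega>) (\<lambda>(x, y). w0 x y)"
    and w0_bdd: "bounded ((\<lambda>(x, y). w0 x y) ` (\<Omega> \<times> \<Omega>))"
    and w0_nonneg: "\<And>x y. x \<in> \<Omega> \<Longrightarrow> y \<in> \<Omega> \<Longrightarrow> w0 x y \<ge> 0"
    and g_def: "\<And>x. x \<in> \<Omega> \<Longrightarrow> g x = (LINT s:{0<..}|lborel. n0 s x)"
    and g_int: "set_integrable lborel \<Omega> g" and g_mass: "(LINT x:\<Omega>|lborel. g x) = 1"
    and p_low_pos: "p_low > 0" and p_inf_pos: "p_inf > 0"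
  shows "\<exists>\<gamma>0>0. \<exists>\<delta>0>0. \<forall>\<gamma> p ns Ns Ss ws n N S w.
      0 < \<gamma> \<and> \<gamma> < \<gamma>0 \<and>
      W1inf p \<and> (\<forall>s>0. \<forall>S'. p_low \<le> p s S' \<and> p s S' \<le> p_inf) \<and> dS_bound p \<delta>0 \<and>
      stationary_state \<Omega> p \<gamma> G I g ns Ns Ss ws \<and>
      limit_solution \<Omega> p \<gamma> G I g w0 n N S w
      \<longrightarrow>
      (\<exists>C>0. \<exists>lam>0. \<forall>t\<ge>0.
         L1_sx \<Omega> (\<lambda>s x. n t s x - ns s x) + L1_xy \<Omega> (\<lambda>x y. w t x y - ws x y)
           \<le> ennreal (C * exp (- lam * t)) * L1_xy \<Omega> (\<lambda>x y. w0 x y - ws x y)) \<and>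
      (\<exists>C>0. \<exists>lam>0. \<forall>t\<ge>0. L1_x \<Omega> (\<lambda>x. S t x - Ss x) \<le> ennreal (C * exp (- lam * t))) \<and>
      (\<exists>C>0. \<exists>lam>0. \<forall>t\<ge>0. L1_x \<Omega> (\<lambda>x. N t x - Ns x) \<le> ennreal (C * exp (- lam * t)))"
proof -
  have Oo: "open \<Omega>" and Ob: "bounded \<Omega>" and One: "\<Omega> \<noteq> {}"
    using dom unfolding bounded_domain_def by auto
  have Os: "\<Omega> \<in> sets lborel" using Oo by simp
  have Ofin: "emeasure lborel \<Omega> < \<infinity>" by (rule emeasure_bounded_finite[OF Ob])
  define \<mu> where "\<mu> = enn2real (emeasure lborel \<Omega>)"
  have \<mu>eq: "emeasure lborel \<Omega> = ennreal \<mu>" using Ofin by (simp add: \<mu>_def)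
  have \<mu>0: "0 \<le> \<mu>" by (simp add: \<mu>_def)
  obtain B0 where B0: "\<And>x. x \<in> \<Omega> \<Longrightarrow> L1_s (\<lambda>s. n0 s x) \<le> ennreal B0"
    using n0_reg unfolding Cb_L1s_def by blast
  have n0i: "\<And>x. x \<in> \<Omega> \<Longrightarrow> set_integrable lborel {0<..} (\<lambda>s. n0 s x)"
    using n0_reg unfolding Cb_L1s_def by blast
  have n0c: "\<And>x e. x \<in> \<Omega> \<Longrightarrow> e > 0 \<Longrightarrow> \<exists>d>0. \<forall>y\<in>\<Omega>. dist y x < d \<longrightarrow> L1_s (\<lambda>s. n0 s y - n0 s x) < ennreal e"
    using n0_reg unfolding Cb_L1s_def by blast
  define B where "B = max 0 B0"
  have B00: "0 \<le> B" by (simp add: B_def)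
  have g0: "0 \<le> g x" if x: "x \<in> \<Omega>" for x
  proof -
    have "0 \<le> (LINT s:{0<..}|lborel. n0 s x)"
      unfolding set_lebesgue_integral_def
      by (rule integral_nonneg_AE) (use n0_nonneg x in \<open>auto simp: indicator_def\<close>)
    then show ?thesis using g_def[OF x] by simp
  qed
  have gB: "g x \<le> B" if x: "x \<in> \<Omega>" for x
  proof -
    have "ennreal \<bar>g x\<bar> \<le> L1_s (\<lambda>s. n0 s x)" using L1_s_lower[OF n0i[OF x]] g_def[OF x] by simp
    also have "\<dots> \<le> ennreal B0" by (rule B0[OF x])
    also have "\<dots> = ennreal B" unfolding B_def by (simp add: ennreal_max_0)
    finally have "\<bar>g x\<bar> \<le> B" using B00 by simp
    then show ?thesis by simp
  qed
  have gc: "\<exists>d>0. \<forall>y\<in>\<Omega>. dist y x < d \<longrightarrow> \<bar>g y - g x\<bar> < e" if x: "x \<in> \<Omega>" and e: "e > 0" for x e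
  proof -
    obtain d where d: "d > 0" "\<And>y. y \<in> \<Omega> \<Longrightarrow> dist y x < d \<Longrightarrow> L1_s (\<lambda>s. n0 s y - n0 s x) < ennreal e"
      using n0c[OF x e] by blast
    have "\<bar>g y - g x\<bar> < e" if y: "y \<in> \<Omega>" "dist y x < d" for y
    proof -
      have "g y - g x = (LINT s:{0<..}|lborel. n0 s y - n0 s x)"
        using g_def[OF x] g_def[OF y(1)] set_integral_diff(2)[OF n0i[OF y(1)] n0i[OF x]] by simp
      then have "ennreal \<bar>g y - g x\<bar> \<le> L1_s (\<lambda>s. n0 s y - n0 s x)"
        using L1_s_lower[OF set_integral_diff(1)[OF n0i[OF y(1)] n0i[OF x]]] by simp
      also have "\<dots> < ennreal e" by (rule d(2)[OF y])
      finally show ?thesis by (simp add: ennreal_less_iff)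
    qed
    then show ?thesis using d(1) by blast
  qed
  obtain W0 where W0: "\<And>x y. x \<in> \<Omega> \<Longrightarrow> y \<in> \<Omega> \<Longrightarrow> \<bar>w0 x y\<bar> \<le> W0"
  proof -
    obtain a where a: "\<forall>v\<in>(\<lambda>(x, y). w0 x y) ` (\<Omega> \<times> \<Omega>). norm v \<le> a"
      using w0_bdd unfolding bounded_iff by blast
    show ?thesis by (rule that[of a]) (use a in auto)
  qed
  obtain x00 where x00: "x00 \<in> \<Omega>" using One by blast
  have W00: "0 \<le> W0" using W0[OF x00 x00] by linarith
  have GB: "\<And>z. \<bar>G z\<bar> \<le> 1" and GL: "\<And>a b c d. \<bar>G (a, b) - G (c, d)\<bar> \<le> \<bar>a - c\<bar> + \<bar>b - d\<bar>"
    using G_facts[OF G_deriv G_norm] by blast+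
  have Gc: "continuous_on UNIV G" using G_smooth unfolding smooth_def by (metis Ck.simps(1))
  have pli: "p_low \<le> p_inf \<or> True" by simp
  define Lf where "Lf = p_inf ^ 2 / p_low ^ 2"
  have Lf0: "0 \<le> Lf" by (simp add: Lf_def)
  define \<delta>0 where "\<delta>0 = 1 / (16 * (B + 1) * (p_inf + 1) * (Lf + 1))"
  have \<delta>0pos: "\<delta>0 > 0" using B00 p_inf_pos Lf0 by (simp add: \<delta>0_def)
  define L where "L = Lf * \<delta>0"
  have L0: "0 \<le> L" using Lf0 \<delta>0pos by (simp add: L_def)
  have Lb: "L \<le> 1 / (16 * (B + 1) * (p_inf + 1))"
  proof -
    have "L \<le> (Lf + 1) * \<delta>0" unfolding L_def using \<delta>0pos by (simp add: distrib_right)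
    also have "\<dots> = 1 / (16 * (B + 1) * (p_inf + 1))"
    proof -
      have nz: "Lf + 1 \<noteq> 0" "B + 1 \<noteq> 0" "p_inf + 1 \<noteq> 0" using Lf0 B00 p_inf_pos by auto
      show ?thesis unfolding \<delta>0_def using nz by simp
    qed
    finally show ?thesis .
  qed
  have BLp: "B * L * p_inf \<le> 1/16"
  proof -
    have "B * L * p_inf = (B * p_inf) * L" by (simp add: mult_ac)
    also have "\<dots> \<le> ((B + 1) * (p_inf + 1)) * (1 / (16 * (B + 1) * (p_inf + 1)))"
      using B00 p_inf_pos L0 Lb by (intro mult_mono) (auto intro: mult_mono)
    also have "\<dots> = 1/16"
    proof -
      have q: "(B + 1) * (p_inf + 1) \<noteq> 0" using B00 p_inf_pos by auto
      have gen: "\<And>q::real. q \<noteq> 0 \<Longrightarrow> q * (1 / (16 * q)) = 1/16" by simp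
      have e1: "16 * (B + 1) * (p_inf + 1) = 16 * ((B + 1) * (p_inf + 1))" by (simp only: mult.assoc)
      show ?thesis unfolding e1 by (rule gen[OF q])
    qed
    finally show ?thesis .
  qed
  have Lsm: "L \<le> 1/16"
  proof -
    have bp: "0 \<le> B * p_inf" using B00 p_inf_pos by simp
    have q1: "16 \<le> 16 * (B + 1) * (p_inf + 1)" using bp B00 p_inf_pos by (simp add: algebra_simps)
    have "1 / (16 * (B + 1) * (p_inf + 1)) \<le> 1 / 16"
      by (rule divide_left_mono[OF q1]) (use B00 p_inf_pos in auto)
    then show ?thesis using Lb by linarith
  qed
  have BL1: "B * L \<le> 1"
  proof -
    have "B * L \<le> (B + 1) * (1 / (16 * (B + 1) * (p_inf + 1)))"
      using B00 L0 Lb by (intro mult_mono) auto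
    also have "\<dots> = 1 / (16 * (p_inf + 1))"
    proof -
      have nz: "B + 1 \<noteq> 0" using B00 by auto
      have gen2: "\<And>a b :: real. a \<noteq> 0 \<Longrightarrow> a * (1 / (a * b)) = 1 / b"
        by (case_tac "b = 0") (simp_all add: field_simps)
      have e2: "16 * (B + 1) * (p_inf + 1) = (B + 1) * (16 * (p_inf + 1))" by (simp only: mult_ac)
      show ?thesis unfolding e2 by (rule gen2[OF nz])
    qed
    also have "\<dots> \<le> 1" using p_inf_pos by (simp add: field_simps)
    finally show ?thesis .
  qed
  have main: "(\<exists>C>0. \<exists>lam>0. \<forall>t\<ge>0.
         L1_sx \<Omega> (\<lambda>s x. n t s x - ns s x) + L1_xy \<Omega> (\<lambda>x y. w t x y - ws x y)
           \<le> ennreal (C * exp (- lam * t)) * L1_xy \<Omega> (\<lambda>x y. w0 x y - ws x y)) \<and>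
      (\<exists>C>0. \<exists>lam>0. \<forall>t\<ge>0. L1_x \<Omega> (\<lambda>x. S t x - Ss x) \<le> ennreal (C * exp (- lam * t))) \<and>
      (\<exists>C>0. \<exists>lam>0. \<forall>t\<ge>0. L1_x \<Omega> (\<lambda>x. N t x - Ns x) \<le> ennreal (C * exp (- lam * t)))"
    if \<gamma>: "0 < \<gamma>" "\<gamma> < 1" and W: "W1inf p" and pb: "\<forall>s>0. \<forall>S'. p_low \<le> p s S' \<and> p s S' \<le> p_inf"
      and dS: "dS_bound p \<delta>0" and st: "stationary_state \<Omega> p \<gamma> G I g ns Ns Ss ws"
      and ls: "limit_solution \<Omega> p \<gamma> G I g w0 n N S w"
    for \<gamma> p ns Ns Ss ws n N S w
  proof -
    have st1: "continuous_on {0..} (\<lambda>s. ns s x) \<and>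
        (\<forall>s>0. ((\<lambda>\<sigma>. ns \<sigma> x) has_real_derivative (- p s (Ss x) * ns s x)) (at s)) \<and>
        Ns x = ns 0 x \<and>
        set_integrable lborel \<Omega> (\<lambda>y. ws x y * Ns y) \<and>
        Ss x = (LINT y:\<Omega>|lborel. ws x y * Ns y) + I x \<and>
        set_integrable lborel {0<..} (\<lambda>s. ns s x) \<and>
        (LINT s:{0<..}|lborel. ns s x) = g x" if "x \<in> \<Omega>" for x
      using st that unfolding stationary_state_def by blast
    have wsG: "ws x y = \<gamma> * G (Ns x, Ns y)" if "x \<in> \<Omega>" "y \<in> \<Omega>" for x y
      using st that unfolding stationary_state_def by blast
    have ls1: "continuous_on {0..} (\<lambda>s. n t s x) \<and>
        (\<forall>s>0. ((\<lambda>\<sigma>. n t \<sigma> x) has_real_derivative (- p s (S t x) * n t s x)) (at s)) \<and>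
        N t x = n t 0 x \<and>
        set_integrable lborel \<Omega> (\<lambda>y. w t x y * N t y) \<and>
        S t x = (LINT y:\<Omega>|lborel. w t x y * N t y) + I x \<and>
        set_integrable lborel {0<..} (\<lambda>s. n t s x) \<and>
        (LINT s:{0<..}|lborel. n t s x) = g x" if "0 \<le> t" "x \<in> \<Omega>" for t x
      using ls that unfolding limit_solution_def by blast
    have ls2: "continuous_on {0..} (\<lambda>t. w t x y) \<and>
        (\<forall>t>0. ((\<lambda>\<tau>. w \<tau> x y) has_real_derivative (- w t x y + \<gamma> * G (N t x, N t y))) (at t)) \<and>
        w 0 x y = w0 x y" if "x \<in> \<Omega>" "y \<in> \<Omega>" for x y
      using ls that unfolding limit_solution_def by blast
    define F where "F = Fp p"
    have Fb: "0 \<le> F v \<and> F v \<le> p_inf" for v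
      using Fp_bounds[OF W pb p_low_pos, of v] p_low_pos unfolding F_def by auto
    have FL: "\<bar>F u - F v\<bar> \<le> L * \<bar>u - v\<bar>" for u v
      using Fp_lip[OF W pb p_low_pos dS, of u v] unfolding F_def L_def Lf_def by (simp add: mult_ac)
    have NsF: "Ns x = g x * F (Ss x)" if x: "x \<in> \<Omega>" for x
      using ode_sol(1)[OF W pb p_low_pos, of "\<lambda>s. ns s x" "Ss x" "g x"] st1[OF x] unfolding F_def by auto
    have nsE: "ns s x = Ns x * Ef p (Ss x) s" if x: "x \<in> \<Omega>" and s: "0 \<le> s" for x s
      using ode_sol(2)[OF W pb p_low_pos, of "\<lambda>s. ns s x" "Ss x" "g x" s] st1[OF x] s by auto
    have NF: "N t x = g x * F (S t x)" if t: "0 \<le> t" and x: "x \<in> \<Omega>" for t x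
      using ode_sol(1)[OF W pb p_low_pos, of "\<lambda>s. n t s x" "S t x" "g x"] ls1[OF t x] unfolding F_def by auto
    have nE: "n t s x = N t x * Ef p (S t x) s" if t: "0 \<le> t" and x: "x \<in> \<Omega>" and s: "0 \<le> s" for t x s
      using ode_sol(2)[OF W pb p_low_pos, of "\<lambda>s. n t s x" "S t x" "g x" s] ls1[OF t x] s by auto
    have wsb: "\<bar>ws x y\<bar> \<le> 1" if "x \<in> \<Omega>" "y \<in> \<Omega>" for x y
    proof -
      have "\<bar>ws x y\<bar> = \<gamma> * \<bar>G (Ns x, Ns y)\<bar>" using wsG[OF that] \<gamma> by (simp add: abs_mult)
      also have "\<dots> \<le> 1 * 1" using GB \<gamma> by (intro mult_mono) auto
      finally show ?thesis by simp
    qed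
    have wb: "\<bar>w t x y\<bar> \<le> W0 + 1" if t: "0 \<le> t" and x: "x \<in> \<Omega>" and y: "y \<in> \<Omega>" for t x y
    proof -
      have "\<bar>w t x y\<bar> \<le> \<bar>w 0 x y\<bar> + 1"
      proof (rule w_bound[where f="\<lambda>\<tau>. w \<tau> x y" and k="\<lambda>\<tau>. \<gamma> * G (N \<tau> x, N \<tau> y)"])
        show "continuous_on {0..} (\<lambda>\<tau>. w \<tau> x y)" using ls2[OF x y] by blast
        show "((\<lambda>\<tau>. w \<tau> x y) has_real_derivative - w \<tau> x y + \<gamma> * G (N \<tau> x, N \<tau> y)) (at \<tau>)" if "0 < \<tau>" for \<tau>
          using ls2[OF x y] that by blast
        show "\<bar>\<gamma> * G (N \<tau> x, N \<tau> y)\<bar> \<le> 1" for \<tau>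
        proof -
          have "\<bar>\<gamma> * G (N \<tau> x, N \<tau> y)\<bar> = \<gamma> * \<bar>G (N \<tau> x, N \<tau> y)\<bar>" using \<gamma> by (simp add: abs_mult)
          also have "\<dots> \<le> 1 * 1" using GB \<gamma> by (intro mult_mono) auto
          finally show ?thesis by simp
        qed
      qed (rule t)
      then show ?thesis using ls2[OF x y] W0[OF x y] by simp
    qed
    have i2: "set_integrable lborel \<Omega> (\<lambda>y. ws x y * Ns y) \<and> Ss x = (LINT y:\<Omega>|lborel. ws x y * Ns y) + I x"
      if "x \<in> \<Omega>" for x using st1[OF that] by blast
    have small1: "1 * L \<le> 1/2" using Lsm by simp
    have stat: "\<bar>S t x - Ss x\<bar> \<le> 2 * p_inf * d \<and> \<bar>N t x - Ns x\<bar> \<le> B * L * (2 * p_inf * d)"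
      if t: "0 \<le> t" and wd: "\<And>x y. x \<in> \<Omega> \<Longrightarrow> y \<in> \<Omega> \<Longrightarrow> \<bar>w t x y - ws x y\<bar> \<le> d" and x: "x \<in> \<Omega>"
      for t d x
    proof -
      have i1: "set_integrable lborel \<Omega> (\<lambda>y. w t x y * N t y) \<and> S t x = (LINT y:\<Omega>|lborel. w t x y * N t y) + I x"
        if "x \<in> \<Omega>" for x using ls1[OF t that] by blast
      have Sd: "\<bar>S t x' - Ss x'\<bar> \<le> 2 * p_inf * d" if x': "x' \<in> \<Omega>" for x'
        by (rule static_cmp[OF One i1 i2 NF[OF t] NsF g0 g_int g_mass Fb FL wb[OF t] wsb wd small1 L0 x'])
      have "\<bar>N t x - Ns x\<bar> = g x * \<bar>F (S t x) - F (Ss x)\<bar>"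
        using NF[OF t x] NsF[OF x] g0[OF x] by (simp add: abs_mult right_diff_distrib[symmetric])
      also have "\<dots> \<le> B * (L * (2 * p_inf * d))"
      proof (rule mult_mono)
        show "\<bar>F (S t x) - F (Ss x)\<bar> \<le> L * (2 * p_inf * d)"
          using FL[of "S t x" "Ss x"] Sd[OF x] L0 by (meson mult_left_mono order_trans)
      qed (use gB[OF x] B00 in auto)
      finally show ?thesis using Sd[OF x] by (simp add: mult_ac)
    qed
    define e where "e t z = w t (fst z) (snd z) - ws (fst z) (snd z)" for t z
    define k where "k t z = \<gamma> * (G (N t (fst z), N t (snd z)) - G (Ns (fst z), Ns (snd z)))" for t z
    define D0 where "D0 = Sup ((\<lambda>z. \<bar>e 0 z\<bar>) ` (\<Omega> \<times> \<Omega>))"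
    have e0b: "\<bar>e 0 z\<bar> \<le> W0 + 2" if "z \<in> \<Omega> \<times> \<Omega>" for z
    proof -
      have "\<bar>e 0 z\<bar> \<le> \<bar>w0 (fst z) (snd z)\<bar> + \<bar>ws (fst z) (snd z)\<bar>"
        using that ls2[of "fst z" "snd z"] unfolding e_def by auto
      then show ?thesis using W0[of "fst z" "snd z"] wsb[of "fst z" "snd z"] that by auto
    qed
    have D0b: "\<bar>e 0 z\<bar> \<le> D0" if "z \<in> \<Omega> \<times> \<Omega>" for z
      unfolding D0_def by (rule cSup_upper) (use that e0b in \<open>auto intro!: bdd_aboveI2\<close>)
    have D00: "0 \<le> D0" using D0b[of "(x00, x00)"] x00 by auto
    have decay: "\<bar>e t z\<bar> \<le> 2 * D0 * exp (- t / 2)" if "0 \<le> t" "z \<in> \<Omega> \<times> \<Omega>" for t z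
    proof (rule sup_gronwall[where e=e and k=k and X="\<Omega> \<times> \<Omega>" and M="W0 + 2" and \<theta>="4 * (B * L * p_inf)"])
      show "\<Omega> \<times> \<Omega> \<noteq> {}" using One by simp
      show "\<bar>e t z\<bar> \<le> W0 + 2" if "0 \<le> t" "z \<in> \<Omega> \<times> \<Omega>" for t z
        using wb[of t "fst z" "snd z"] wsb[of "fst z" "snd z"] that unfolding e_def by auto
      show "continuous_on {0..} (\<lambda>t. e t z)" if "z \<in> \<Omega> \<times> \<Omega>" for z
        unfolding e_def using ls2[of "fst z" "snd z"] that by (auto intro!: continuous_intros)
      show "((\<lambda>t. e t z) has_real_derivative - e t z + k t z) (at t)" if z: "z \<in> \<Omega> \<times> \<Omega>" and t: "0 < t" for z t
      proof -
        have "((\<lambda>t. w t (fst z) (snd z) - ws (fst z) (snd z)) has_real_derivative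
            (- w t (fst z) (snd z) + \<gamma> * G (N t (fst z), N t (snd z))) - 0) (at t)"
          using ls2[of "fst z" "snd z"] z t by (intro DERIV_diff DERIV_const) auto
        moreover have "(- w t (fst z) (snd z) + \<gamma> * G (N t (fst z), N t (snd z))) - 0 = - e t z + k t z"
          using wsG[of "fst z" "snd z"] z unfolding e_def k_def by (auto simp: algebra_simps)
        ultimately have "((\<lambda>t. w t (fst z) (snd z) - ws (fst z) (snd z)) has_real_derivative - e t z + k t z) (at t)"
          by (rule DERIV_cong)
        moreover have "(\<lambda>t. e t z) = (\<lambda>t. w t (fst z) (snd z) - ws (fst z) (snd z))" by (simp add: e_def)
        ultimately show ?thesis by simp
      qed
      show "\<bar>k t z\<bar> \<le> 4 * (B * L * p_inf) * d"
        if t: "0 < t" and hd: "\<And>z. z \<in> \<Omega> \<times> \<Omega> \<Longrightarrow> \<bar>e t z\<bar> \<le> d" and z: "z \<in> \<Omega> \<times> \<Omega>" for t d z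
      proof -
        have wd: "\<bar>w t x y - ws x y\<bar> \<le> d" if "x \<in> \<Omega>" "y \<in> \<Omega>" for x y
          using hd[of "(x, y)"] that unfolding e_def by auto
        have n1: "\<bar>N t (fst z) - Ns (fst z)\<bar> \<le> B * L * (2 * p_inf * d)"
          using stat[OF less_imp_le[OF t] wd, of "fst z"] z by auto
        have n2: "\<bar>N t (snd z) - Ns (snd z)\<bar> \<le> B * L * (2 * p_inf * d)"
          using stat[OF less_imp_le[OF t] wd, of "snd z"] z by auto
        have "\<bar>k t z\<bar> = \<gamma> * \<bar>G (N t (fst z), N t (snd z)) - G (Ns (fst z), Ns (snd z))\<bar>"
          unfolding k_def using \<gamma> by (simp add: abs_mult)
        also have "\<dots> \<le> 1 * (B * L * (2 * p_inf * d) + B * L * (2 * p_inf * d))"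
        proof (rule mult_mono)
          show "\<bar>G (N t (fst z), N t (snd z)) - G (Ns (fst z), Ns (snd z))\<bar> \<le> B * L * (2 * p_inf * d) + B * L * (2 * p_inf * d)"
            using GL[of "N t (fst z)" "N t (snd z)" "Ns (fst z)" "Ns (snd z)"] n1 n2 by linarith
        qed (use \<gamma> in auto)
        also have "\<dots> = 4 * (B * L * p_inf) * d" by (simp add: algebra_simps)
        finally show ?thesis .
      qed
      show "0 \<le> 4 * (B * L * p_inf)" using B00 L0 p_inf_pos by simp
      show "4 * (B * L * p_inf) \<le> 1/4" using BLp by simp
      show "\<bar>e 0 z\<bar> \<le> D0" if "z \<in> \<Omega> \<times> \<Omega>" for z using D0b[OF that] .
    qed (use that in auto)
    define d where "d t = 2 * D0 * exp (- t / 2)" for t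
    have d0: "0 \<le> d t" for t using D00 by (simp add: d_def)
    have wd: "\<bar>w t x y - ws x y\<bar> \<le> d t" if t: "0 \<le> t" and x: "x \<in> \<Omega>" and y: "y \<in> \<Omega>" for t x y
      using decay[OF t, of "(x, y)"] x y unfolding e_def d_def by simp
    have Sd: "\<bar>S t x - Ss x\<bar> \<le> 2 * p_inf * d t" if t: "0 \<le> t" and x: "x \<in> \<Omega>" for t x
      using stat[OF t wd[OF t], of x] x by blast
    have Nd: "\<bar>N t x - Ns x\<bar> \<le> d t" if t: "0 \<le> t" and x: "x \<in> \<Omega>" for t x
    proof -
      have "\<bar>N t x - Ns x\<bar> \<le> B * L * (2 * p_inf * d t)" using stat[OF t wd[OF t], of x] x by blast
      also have "\<dots> = 2 * (B * L * p_inf) * d t" by (simp add: mult_ac)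
      also have "\<dots> \<le> 2 * (1/16) * d t" using BLp d0[of t] by (intro mult_right_mono) auto
      also have "\<dots> \<le> d t" using d0[of t] by simp
      finally show ?thesis .
    qed
    have expeq: "exp (- (1/2) * t) = exp (- t / 2)" for t :: real by simp
    have concSC: "0 < 4 * p_inf * D0 * \<mu> + 1" using p_inf_pos D00 \<mu>0 by (simp add: add_nonneg_pos)
    have concSb: "\<forall>t\<ge>0. L1_x \<Omega> (\<lambda>x. S t x - Ss x) \<le> ennreal ((4 * p_inf * D0 * \<mu> + 1) * exp (- (1/2) * t))"
    proof (intro allI impI)
      fix t :: real assume t: "0 \<le> t"
      have "L1_x \<Omega> (\<lambda>x. S t x - Ss x) \<le> ennreal (2 * p_inf * d t) * emeasure lborel \<Omega>"
        by (rule L1_x_bound[OF Os]) (use Sd[OF t] in auto)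
      also have "\<dots> = ennreal (2 * p_inf * d t * \<mu>)"
        using \<mu>eq p_inf_pos d0[of t] \<mu>0 by (simp add: ennreal_mult)
      also have "\<dots> \<le> ennreal ((4 * p_inf * D0 * \<mu> + 1) * exp (- (1/2) * t))"
      proof (rule ennreal_leI)
        have "2 * p_inf * d t * \<mu> = (4 * p_inf * D0 * \<mu>) * exp (- t / 2)" by (simp add: d_def mult_ac)
        also have "\<dots> \<le> (4 * p_inf * D0 * \<mu> + 1) * exp (- t / 2)" by (intro mult_right_mono) auto
        finally show "2 * p_inf * d t * \<mu> \<le> (4 * p_inf * D0 * \<mu> + 1) * exp (- (1/2) * t)" by (simp only: expeq)
      qed
      finally show "L1_x \<Omega> (\<lambda>x. S t x - Ss x) \<le> ennreal ((4 * p_inf * D0 * \<mu> + 1) * exp (- (1/2) * t))" .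
    qed
    have concS: "\<exists>C>0. \<exists>lam>0. \<forall>t\<ge>0. L1_x \<Omega> (\<lambda>x. S t x - Ss x) \<le> ennreal (C * exp (- lam * t))"
      apply (rule exI[of _ "4 * p_inf * D0 * \<mu> + 1"])
      apply (rule conjI[OF concSC])
      apply (rule exI[of _ "1/2::real"])
      apply (rule conjI)
       apply simp
      apply (rule concSb)
      done
    have concNC: "0 < 2 * D0 * \<mu> + 1" using D00 \<mu>0 by (simp add: add_nonneg_pos)
    have concNb: "\<forall>t\<ge>0. L1_x \<Omega> (\<lambda>x. N t x - Ns x) \<le> ennreal ((2 * D0 * \<mu> + 1) * exp (- (1/2) * t))"
    proof (intro allI impI)
      fix t :: real assume t: "0 \<le> t"
      have "L1_x \<Omega> (\<lambda>x. N t x - Ns x) \<le> ennreal (d t) * emeasure lborel \<Omega>"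
        by (rule L1_x_bound[OF Os]) (use Nd[OF t] in auto)
      also have "\<dots> = ennreal (d t * \<mu>)"
        using \<mu>eq d0[of t] \<mu>0 by (simp add: ennreal_mult)
      also have "\<dots> \<le> ennreal ((2 * D0 * \<mu> + 1) * exp (- (1/2) * t))"
      proof (rule ennreal_leI)
        have "d t * \<mu> = (2 * D0 * \<mu>) * exp (- t / 2)" by (simp add: d_def mult_ac)
        also have "\<dots> \<le> (2 * D0 * \<mu> + 1) * exp (- t / 2)" by (intro mult_right_mono) auto
        finally show "d t * \<mu> \<le> (2 * D0 * \<mu> + 1) * exp (- (1/2) * t)" by (simp only: expeq)
      qed
      finally show "L1_x \<Omega> (\<lambda>x. N t x - Ns x) \<le> ennreal ((2 * D0 * \<mu> + 1) * exp (- (1/2) * t))" .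
    qed
    have concN: "\<exists>C>0. \<exists>lam>0. \<forall>t\<ge>0. L1_x \<Omega> (\<lambda>x. N t x - Ns x) \<le> ennreal (C * exp (- lam * t))"
      apply (rule exI[of _ "2 * D0 * \<mu> + 1"])
      apply (rule conjI[OF concNC])
      apply (rule exI[of _ "1/2::real"])
      apply (rule conjI)
       apply simp
      apply (rule concNb)
      done
    define K1 where "K1 = 1 / p_low + 2 * B * p_inf * p_inf * \<delta>0 / p_low ^ 2"
    have K10: "0 \<le> K1" using B00 p_inf_pos p_low_pos \<delta>0pos by (simp add: K1_def)
    have nd: "L1_s (\<lambda>s. n t s x - ns s x) \<le> ennreal (K1 * d t)" if t: "0 \<le> t" and x: "x \<in> \<Omega>" for t x
    proof -
      define c where "c = 2 * B * p_inf * p_inf * \<delta>0 * d t"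
      define h where "h s = d t * (s ^ 0 * exp (- p_low * s)) + c * (s ^ 1 * exp (- p_low * s))" for s
      have hi: "set_integrable lborel {0<..} h"
        unfolding h_def
        by (intro set_integral_add(1) set_integrable_mult_right exp_moment_int(1)[OF p_low_pos])
      have hI: "(LINT s:{0<..}|lborel. h s) = K1 * d t"
      proof -
        have "(LINT s:{0<..}|lborel. h s) = d t * (LINT s:{0<..}|lborel. s ^ 0 * exp (- p_low * s)) + c * (LINT s:{0<..}|lborel. s ^ 1 * exp (- p_low * s))"
        proof -
          have ei0: "set_integrable lborel {0<..} (\<lambda>t. exp (- (p_low * t)))"
            using exp_moment_int(1)[OF p_low_pos, of 0] by simp
          have ei1: "set_integrable lborel {0<..} (\<lambda>t. t * exp (- (p_low * t)))"
            using exp_moment_int(1)[OF p_low_pos, of 1] by simp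
          show ?thesis unfolding h_def
            by (subst set_integral_add(2)) (use ei0 ei1 in \<open>auto intro!: set_integrable_mult_right\<close>)
        qed
        also have "\<dots> = d t * (1 / p_low) + c * (1 / p_low ^ 2)"
          using exp_moment_int(2)[OF p_low_pos, of 0] exp_moment_int(2)[OF p_low_pos, of 1]
          by (simp add: power2_eq_square)
        also have "\<dots> = K1 * d t" unfolding K1_def c_def by (simp add: algebra_simps)
        finally show ?thesis .
      qed
      have pw: "\<bar>n t s x - ns s x\<bar> \<le> h s" if s: "s > 0" for s
      proof -
        have s0: "0 \<le> s" using s by simp
        have eq: "n t s x - ns s x = (N t x - Ns x) * Ef p (S t x) s + Ns x * (Ef p (S t x) s - Ef p (Ss x) s)"
          using nE[OF t x s0] nsE[OF x s0] by (simp add: algebra_simps)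
        have E1: "0 \<le> Ef p (S t x) s \<and> Ef p (S t x) s \<le> exp (- p_low * s)"
          using Ef_bounds[OF W pb s0, of "S t x"] by (auto intro: order_trans[OF exp_ge_zero])
        have a1: "\<bar>(N t x - Ns x) * Ef p (S t x) s\<bar> \<le> d t * exp (- p_low * s)"
          using Nd[OF t x] E1 by (simp add: abs_mult) (intro mult_mono, auto)
        have Nsb: "\<bar>Ns x\<bar> \<le> B * p_inf"
          using NsF[OF x] g0[OF x] gB[OF x] Fb[of "Ss x"] by (simp add: abs_mult) (intro mult_mono, auto)
        have Eb: "\<bar>Ef p (S t x) s - Ef p (Ss x) s\<bar> \<le> \<delta>0 * (2 * p_inf * d t) * (s * exp (- p_low * s))"
        proof -
          have "\<bar>Ef p (S t x) s - Ef p (Ss x) s\<bar> \<le> \<delta>0 * \<bar>S t x - Ss x\<bar> * (s * exp (- p_low * s))"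
            by (rule Ef_lip[OF W pb dS s0])
          also have "\<dots> \<le> \<delta>0 * (2 * p_inf * d t) * (s * exp (- p_low * s))"
            using Sd[OF t x] \<delta>0pos s0 by (intro mult_right_mono mult_left_mono) auto
          finally show ?thesis .
        qed
        have a2: "\<bar>Ns x * (Ef p (S t x) s - Ef p (Ss x) s)\<bar> \<le> (B * p_inf) * (\<delta>0 * (2 * p_inf * d t) * (s * exp (- p_low * s)))"
          unfolding abs_mult by (rule mult_mono[OF Nsb Eb]) (use B00 p_inf_pos in auto)
        have "\<bar>n t s x - ns s x\<bar> \<le> d t * exp (- p_low * s) + (B * p_inf) * (\<delta>0 * (2 * p_inf * d t) * (s * exp (- p_low * s)))"
          unfolding eq using a1 a2 abs_triangle_ineq by (smt (verit))
        also have "\<dots> = h s" unfolding h_def c_def by (simp add: algebra_simps)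
        finally show ?thesis .
      qed
      show ?thesis using L1_s_bound[OF hi pw] hI by simp
    qed
    define K2 where "K2 = K1 * \<mu> + \<mu> * \<mu>"
    have K20: "0 \<le> K2" using K10 \<mu>0 by (simp add: K2_def)
    have lhs: "L1_sx \<Omega> (\<lambda>s x. n t s x - ns s x) + L1_xy \<Omega> (\<lambda>x y. w t x y - ws x y) \<le> ennreal (K2 * d t)"
      if t: "0 \<le> t" for t
    proof -
      have "L1_sx \<Omega> (\<lambda>s x. n t s x - ns s x) \<le> ennreal (K1 * d t) * emeasure lborel \<Omega>"
        by (rule L1_sx_bound[OF Os]) (use nd[OF t] in auto)
      also have "\<dots> = ennreal (K1 * d t * \<mu>)" using \<mu>eq K10 d0[of t] \<mu>0 by (simp add: ennreal_mult)
      finally have l1: "L1_sx \<Omega> (\<lambda>s x. n t s x - ns s x) \<le> ennreal (K1 * d t * \<mu>)" .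
      have "L1_xy \<Omega> (\<lambda>x y. w t x y - ws x y) \<le> ennreal (d t) * emeasure lborel \<Omega> * emeasure lborel \<Omega>"
        by (rule L1_xy_bound[OF Os]) (use wd[OF t] in auto)
      also have "\<dots> = ennreal (d t * \<mu> * \<mu>)" using \<mu>eq d0[of t] \<mu>0 by (simp add: ennreal_mult)
      finally have l2: "L1_xy \<Omega> (\<lambda>x y. w t x y - ws x y) \<le> ennreal (d t * \<mu> * \<mu>)" .
      have "L1_sx \<Omega> (\<lambda>s x. n t s x - ns s x) + L1_xy \<Omega> (\<lambda>x y. w t x y - ws x y) \<le> ennreal (K1 * d t * \<mu>) + ennreal (d t * \<mu> * \<mu>)"
        by (rule add_mono[OF l1 l2])
      also have "\<dots> = ennreal (K2 * d t)"
        using K10 d0[of t] \<mu>0 by (simp add: ennreal_plus[symmetric] K2_def algebra_simps del: ennreal_plus)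
      finally show ?thesis .
    qed
    define R where "R = L1_xy \<Omega> (\<lambda>x y. w0 x y - ws x y)"
    have Rfin: "R < \<infinity>"
    proof -
      have "R \<le> ennreal (W0 + 1) * emeasure lborel \<Omega> * emeasure lborel \<Omega>"
        unfolding R_def
      proof (rule L1_xy_bound[OF Os])
        fix x y assume "x \<in> \<Omega>" "y \<in> \<Omega>"
        then show "\<bar>w0 x y - ws x y\<bar> \<le> W0 + 1" using W0 wsb by (smt (verit))
      qed
      also have "\<dots> < \<infinity>" using \<mu>eq by (simp add: ennreal_mult_less_top)
      finally show ?thesis .
    qed
    have pos: "R > 0" if D0p: "D0 > 0"
    proof -
      have "\<exists>z\<in>\<Omega> \<times> \<Omega>. e 0 z \<noteq> 0"
      proof (rule ccontr)
        assume "\<not> (\<exists>z\<in>\<Omega> \<times> \<Omega>. e 0 z \<noteq> 0)"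
        then have "(\<lambda>z. \<bar>e 0 z\<bar>) ` (\<Omega> \<times> \<Omega>) = (\<lambda>z. 0) ` (\<Omega> \<times> \<Omega>)"
          by (intro image_cong) auto
        also have "\<dots> = {0}" using One by auto
        finally have "(\<lambda>z. \<bar>e 0 z\<bar>) ` (\<Omega> \<times> \<Omega>) = {0}" .
        then have "D0 = 0" unfolding D0_def by simp
        with D0p show False by simp
      qed
      then obtain x0 y0 where x0: "x0 \<in> \<Omega>" and y0: "y0 \<in> \<Omega>" and nz0: "e 0 (x0, y0) \<noteq> 0" by auto
      define c0 where "c0 = \<bar>w0 x0 y0 - ws x0 y0\<bar>"
      have c0p: "c0 > 0" using nz0 ls2[OF x0 y0] unfolding c0_def e_def by simp
      have smallc: "B * L * \<gamma> * p_inf \<le> 1/2"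
      proof -
        have "B * L * \<gamma> * p_inf = (B * L * p_inf) * \<gamma>" by (simp add: mult_ac)
        also have "\<dots> \<le> (1/16) * 1" using BLp \<gamma> B00 L0 p_inf_pos by (intro mult_mono) auto
        finally show ?thesis by simp
      qed
      have Nsc: "continuous_on \<Omega> Ns"
        unfolding continuous_on_iff
      proof (intro ballI allI impI)
        fix x and \<epsilon> :: real assume x: "x \<in> \<Omega>" and \<epsilon>: "\<epsilon> > 0"
        have \<epsilon>1: "\<epsilon> / (4 * (p_inf + 1)) > 0" using \<epsilon> p_inf_pos by simp
        obtain d1 where d1: "d1 > 0" "\<And>y. y \<in> \<Omega> \<Longrightarrow> dist y x < d1 \<Longrightarrow> \<bar>g y - g x\<bar> < \<epsilon> / (4 * (p_inf + 1))"
          using gc[OF x \<epsilon>1] by blast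
        obtain d2 where d2: "d2 > 0" "\<And>y. y \<in> \<Omega> \<Longrightarrow> dist y x < d2 \<Longrightarrow> dist (I y) (I x) < \<epsilon> / 4"
          using I_cont x \<epsilon> unfolding continuous_on_iff by (metis divide_pos_pos zero_less_numeral)
        show "\<exists>\<delta>>0. \<forall>x'\<in>\<Omega>. dist x' x < \<delta> \<longrightarrow> dist (Ns x') (Ns x) < \<epsilon>"
        proof (intro exI[of _ "min d1 d2"] conjI ballI impI)
          show "0 < min d1 d2" using d1 d2 by simp
          fix x' assume x': "x' \<in> \<Omega>" and dx: "dist x' x < min d1 d2"
          have "\<bar>Ns x' - Ns x\<bar> \<le> 2 * p_inf * \<bar>g x' - g x\<bar> + 2 * \<bar>I x' - I x\<bar>"
            by (rule stat_cont[OF x' x i2 NsF wsG GL g0 gB g_int g_mass Fb FL less_imp_le[OF \<gamma>(1)] smallc BL1 L0])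
          moreover have "2 * p_inf * \<bar>g x' - g x\<bar> \<le> \<epsilon> / 2"
          proof -
            have "2 * p_inf * \<bar>g x' - g x\<bar> \<le> 2 * p_inf * (\<epsilon> / (4 * (p_inf + 1)))"
              using d1(2)[OF x'] dx p_inf_pos by (intro mult_left_mono) auto
            also have "\<dots> = (\<epsilon> / 2) * (p_inf / (p_inf + 1))" using p_inf_pos by (simp add: field_simps)
            also have "\<dots> \<le> (\<epsilon> / 2) * 1" using p_inf_pos \<epsilon> by (intro mult_left_mono) auto
            finally show ?thesis by simp
          qed
          moreover have "2 * \<bar>I x' - I x\<bar> < \<epsilon> / 2" using d2(2)[OF x'] dx by (simp add: dist_real_def)
          ultimately show "dist (Ns x') (Ns x) < \<epsilon>" by (simp add: dist_real_def)
        qed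
      qed
      define f where "f z = w0 (fst z) (snd z) - \<gamma> * G (Ns (fst z), Ns (snd z))" for z
      have fc: "continuous_on (\<Omega> \<times> \<Omega>) f"
      proof -
        have c1: "continuous_on (\<Omega> \<times> \<Omega>) (\<lambda>z. w0 (fst z) (snd z))"
          using w0_cont by (simp add: case_prod_beta)
        have cf: "continuous_on (\<Omega> \<times> \<Omega>) (\<lambda>z. Ns (fst z))"
          by (rule continuous_on_compose2[OF Nsc]) (auto intro: continuous_intros)
        have cs: "continuous_on (\<Omega> \<times> \<Omega>) (\<lambda>z. Ns (snd z))"
          by (rule continuous_on_compose2[OF Nsc]) (auto intro: continuous_intros)
        have c2: "continuous_on (\<Omega> \<times> \<Omega>) (\<lambda>z. G (Ns (fst z), Ns (snd z)))"
          by (rule continuous_on_compose2[OF Gc]) (auto intro: continuous_on_Pair cf cs)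
        show ?thesis unfolding f_def by (intro continuous_intros c1 c2)
      qed
      have z0: "(x0, y0) \<in> \<Omega> \<times> \<Omega>" using x0 y0 by simp
      have c02: "c0 / 2 > 0" using c0p by simp
      obtain d1 where d1: "d1 > 0" "\<And>z. z \<in> \<Omega> \<times> \<Omega> \<Longrightarrow> dist z (x0, y0) < d1 \<Longrightarrow> dist (f z) (f (x0, y0)) < c0 / 2"
        using fc z0 c02 unfolding continuous_on_iff by metis
      have "open (\<Omega> \<times> \<Omega>)" using Oo by (simp add: open_Times)
      then obtain r where r: "r > 0" "ball (x0, y0) r \<subseteq> \<Omega> \<times> \<Omega>"
        using z0 unfolding open_contains_ball by blast
      define \<rho> where "\<rho> = min d1 r / 4"
      have \<rho>0: "\<rho> > 0" using d1 r by (simp add: \<rho>_def)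
      have f0: "\<bar>f (x0, y0)\<bar> = c0" using wsG[OF x0 y0] unfolding f_def c0_def by simp
      show "R > 0" unfolding R_def
      proof (rule L1_xy_pos[OF _ \<rho>0 c02])
        fix x y assume x: "x \<in> cball x0 \<rho>" and y: "y \<in> cball y0 \<rho>"
        have "dist (x, y) (x0, y0) \<le> dist x x0 + dist y y0"
          using norm_Pair_le[of "x - x0" "y - y0"] by (simp add: dist_norm)
        also have "\<dots> \<le> \<rho> + \<rho>" using x y by (simp add: dist_commute)
        also have "\<dots> < min d1 r" using \<rho>0 unfolding \<rho>_def by (simp add: min_def)
        finally have dz: "dist (x, y) (x0, y0) < min d1 r" .
        then have "(x, y) \<in> ball (x0, y0) r" by (simp add: dist_commute)
        then have xy: "(x, y) \<in> \<Omega> \<times> \<Omega>" using r by blast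
        have "dist (f (x, y)) (f (x0, y0)) < c0 / 2" using d1(2)[OF xy] dz by simp
        then have dd: "\<bar>f (x, y) - f (x0, y0)\<bar> < c0 / 2" by (simp add: dist_real_def)
        have aux: "\<And>a b c :: real. \<bar>a - b\<bar> < c / 2 \<Longrightarrow> \<bar>b\<bar> = c \<Longrightarrow> c / 2 \<le> \<bar>a\<bar>" by arith
        have "c0 / 2 \<le> \<bar>f (x, y)\<bar>" by (rule aux[OF dd f0])
        moreover have "f (x, y) = w0 x y - ws x y" using wsG xy unfolding f_def by simp
        ultimately show "x \<in> \<Omega> \<and> y \<in> \<Omega> \<and> c0 / 2 \<le> \<bar>w0 x y - ws x y\<bar>" using xy by simp
      qed
    qed
    have conc1: "\<exists>C>0. \<exists>lam>0. \<forall>t\<ge>0.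
         L1_sx \<Omega> (\<lambda>s x. n t s x - ns s x) + L1_xy \<Omega> (\<lambda>x y. w t x y - ws x y)
           \<le> ennreal (C * exp (- lam * t)) * L1_xy \<Omega> (\<lambda>x y. w0 x y - ws x y)"
    proof (cases "D0 = 0")
      case True
      have b: "\<forall>t\<ge>0. L1_sx \<Omega> (\<lambda>s x. n t s x - ns s x) + L1_xy \<Omega> (\<lambda>x y. w t x y - ws x y)
           \<le> ennreal (1 * exp (- (1/2) * t)) * L1_xy \<Omega> (\<lambda>x y. w0 x y - ws x y)"
      proof (intro allI impI)
        fix t :: real assume t: "0 \<le> t"
        have "L1_sx \<Omega> (\<lambda>s x. n t s x - ns s x) + L1_xy \<Omega> (\<lambda>x y. w t x y - ws x y) \<le> ennreal (K2 * d t)"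
          by (rule lhs[OF t])
        also have "\<dots> = 0" using True by (simp add: d_def)
        finally show "L1_sx \<Omega> (\<lambda>s x. n t s x - ns s x) + L1_xy \<Omega> (\<lambda>x y. w t x y - ws x y)
           \<le> ennreal (1 * exp (- (1/2) * t)) * L1_xy \<Omega> (\<lambda>x y. w0 x y - ws x y)" by simp
      qed
      show ?thesis
        apply (rule exI[of _ "1::real"])
        apply (rule conjI, simp)
        apply (rule exI[of _ "1/2::real"])
        apply (rule conjI, simp)
        apply (rule b)
        done
    next
      case False
      then have D0p: "D0 > 0" using D00 by simp
      define r where "r = enn2real R"
      have Rr: "R = ennreal r" using Rfin by (simp add: r_def)
      have r0: "r > 0" using pos[OF D0p] Rr by (metis ennreal_less_zero_iff)
      define C where "C = 2 * K2 * D0 / r + 1"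
      have C0: "C > 0" using K20 D00 r0 by (simp add: C_def add_nonneg_pos)
      have b: "\<forall>t\<ge>0. L1_sx \<Omega> (\<lambda>s x. n t s x - ns s x) + L1_xy \<Omega> (\<lambda>x y. w t x y - ws x y)
           \<le> ennreal (C * exp (- (1/2) * t)) * L1_xy \<Omega> (\<lambda>x y. w0 x y - ws x y)"
      proof (intro allI impI)
        fix t :: real assume t: "0 \<le> t"
        have "L1_sx \<Omega> (\<lambda>s x. n t s x - ns s x) + L1_xy \<Omega> (\<lambda>x y. w t x y - ws x y) \<le> ennreal (K2 * d t)"
          by (rule lhs[OF t])
        also have "\<dots> \<le> ennreal (C * exp (- (1/2) * t) * r)"
        proof (rule ennreal_leI)
          have "K2 * d t = (2 * K2 * D0) * exp (- t / 2)" by (simp add: d_def mult_ac)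
          also have "\<dots> \<le> (C * r) * exp (- t / 2)"
          proof (rule mult_right_mono)
            have "C * r = 2 * K2 * D0 + r" using r0 by (simp add: C_def field_simps)
            then show "2 * K2 * D0 \<le> C * r" using r0 by simp
          qed simp
          finally have "K2 * d t \<le> C * r * exp (- t / 2)" .
          then show "K2 * d t \<le> C * exp (- (1/2) * t) * r" unfolding expeq by (simp only: mult_ac)
        qed
        also have "\<dots> = ennreal (C * exp (- (1/2) * t)) * L1_xy \<Omega> (\<lambda>x y. w0 x y - ws x y)"
          using Rr C0 r0 unfolding R_def by (simp add: ennreal_mult)
        finally show "L1_sx \<Omega> (\<lambda>s x. n t s x - ns s x) + L1_xy \<Omega> (\<lambda>x y. w t x y - ws x y)
           \<le> ennreal (C * exp (- (1/2) * t)) * L1_xy \<Omega> (\<lambda>x y. w0 x y - ws x y)" .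
      qed
      show ?thesis
        apply (rule exI[of _ C])
        apply (rule conjI[OF C0])
        apply (rule exI[of _ "1/2::real"])
        apply (rule conjI, simp)
        apply (rule b)
        done
    qed
    show ?thesis using conc1 concS concN by blast
  qed
  have all: "\<forall>\<gamma> p ns Ns Ss ws n N S w.
      0 < \<gamma> \<and> \<gamma> < 1 \<and>
      W1inf p \<and> (\<forall>s>0. \<forall>S'. p_low \<le> p s S' \<and> p s S' \<le> p_inf) \<and> dS_bound p \<delta>0 \<and>
      stationary_state \<Omega> p \<gamma> G I g ns Ns Ss ws \<and>
      limit_solution \<Omega> p \<gamma> G I g w0 n N S w
      \<longrightarrow>
      (\<exists>C>0. \<exists>lam>0. \<forall>t\<ge>0.
         L1_sx \<Omega> (\<lambda>s x. n t s x - ns s x) + L1_xy \<Omega> (\<lambda>x y. w t x y - ws x y)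
           \<le> ennreal (C * exp (- lam * t)) * L1_xy \<Omega> (\<lambda>x y. w0 x y - ws x y)) \<and>
      (\<exists>C>0. \<exists>lam>0. \<forall>t\<ge>0. L1_x \<Omega> (\<lambda>x. S t x - Ss x) \<le> ennreal (C * exp (- lam * t))) \<and>
      (\<exists>C>0. \<exists>lam>0. \<forall>t\<ge>0. L1_x \<Omega> (\<lambda>x. N t x - Ns x) \<le> ennreal (C * exp (- lam * t)))"
    by (intro allI impI, elim conjE) (rule main; assumption)
  show ?thesis
    apply (rule exI[of _ "1::real"])
    apply (rule conjI)
     apply simp
    apply (rule exI[of _ \<delta>0])
    apply (rule conjI)
     apply (rule \<delta>0pos)
    apply (rule all)
    done
qed


end
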